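(* Let $G$ be a finite group with the supercharacter theory for which $\mathrm{scf}(G)=\mathbb{C}\text{-span}\{\mathbb{1},\mathbf{reg}\}$, and let $\mu=(\mu_1,\dots,\mu_\ell)\vDash n$. (Case $\alpha=\beta=\iota=\mathbb{1}$.) In $\mathcal{H}_{(\mathbb{1},\mathbb{1},\mathbb{1})}$ with antipode $S$, \[ S(\chi^{\mathrm{bn}_0(\mu)})=(-1)^{\ell(\mu)}\,\chi^{\mathrm{bn}_0((\mu_\ell))}\cdot\chi^{\mathrm{bn}_0((\mu_{\ell-1}))}\cdots\chi^{\mathrm{bn}_0((\mu_1))}. \] (Case $\iota=\mathbf{reg}$, $\alpha=\mathbb{1}$, $\beta=(\mathbf{reg}-\mathbb{1})^*$.) In $\mathcal{H}_{(\mathbf{reg},\mathbb{1},(\mathbf{reg}-\mathbb{1})^* )}$ with antipode $S$, \[ S\big(\mathrm{Ind}_{G^{n-1}_{\mathrm{bn}_1(\mu)}}^{G^{n-1}}(\mathbb{1})\big)=\sum_{\nu\text{ refines }(\mu_\ell,\dots,\mu_2,\mu_1)}(-1)^{\ell(\nu)}\,\mathrm{Ind}_{G^{n-1}_{\mathrm{bn}_1(\nu)}}^{G^{n-1}}(\mathbb{1}). \]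
   Context: $G$ is a nontrivial finite group with superclasses $\{1\}$, $G\setminus\{1\}$ and supercharacters $\mathbb{1}$, $\mathbf{reg}-\mathbb{1}$, so $\mathrm{scf}(G)=\mathbb{C}\text{-span}\{\mathbb{1},\mathbf{reg}\}$; $\langle\psi,\gamma\rangle=|G|^{-1}\sum_g\psi(g)\overline{\gamma(g)}$. $(\mathbf{reg}-\mathbb{1})^*$ denotes $(\mathbf{reg}-\mathbb{1})/(|G|-1)$, the element dual to $\mathbf{reg}-\mathbb{1}$ with respect to the basis $\{\mathbb{1},\mathbf{reg}-\mathbb{1}\}$. For $n\ge1$, $G^{n-1}=G\times\cdots\times G\times\{1\}$, $\mathrm{scf}(G^{n-1})$ is spanned by $\psi_1\otimes\cdots\otimes\psi_{n-1}\otimes\chi^{()}:(g_1,\dots,g_{n-1},1)\mapsto\prod\psi_j(g_j)$ ($\chi^{()}$ trivial character of the trivial group); $\mathrm{scf}(G^{-1}):=\mathbb{C}\chi^\emptyset$. For $\iota,\alpha,\beta\in\mathrm{scf}(G)$ with $\langle\iota,\alpha\rangle=\langle\iota,\beta\rangle=1$, $\mathcal{H}_{(\iota,\alpha,\beta)}=\bigoplus_{n\ge0}\mathrm{scf}(G^{n-1})$ is the graded connected Hopf algebra with unit $\chi^\emptyset$, product $(\gamma_1\otimes\cdots\otimes\gamma_{m-1}\otimes\chi^{()})\cdot(\psi_1\otimes\cdots\otimes\psi_{n-1}\otimes\chi^{()})=\gamma_1\otimes\cdots\otimes\gamma_{m-1}\otimes\iota\otimes\psi_1\otimes\cdots\otimes\psi_{n-1}\otimes\chi^{()}$,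 coproduct $\Delta(\psi)=\sum_{A\subseteq[n]}\psi^{A}\otimes\psi^{[n]\setminus A}$ for $\psi=\psi_1\otimes\cdots\otimes\psi_{n-1}\otimes\chi^{()}$, where $\psi^\emptyset=\chi^\emptyset$; for nonempty $A=\{a_1<\dots<a_k\}$, $\psi^{A}=\lambda_A\,x_{a_1}\otimes\cdots\otimes x_{a_{k-1}}\otimes\chi^{()}$ with $x_{a_i}=\psi_{a_i}$ if $a_{i+1}=a_i+1$, else $\langle\psi_{a_i},\alpha\rangle\iota$, and $\lambda_A=\langle\psi_{a_k},\alpha\rangle$ if $a_k<n$, $1$ if $a_k=n$; $\psi^{[n]\setminus A}$ is the same with $\beta$ in place of $\alpha$. For an integer composition $\mu\vDash n$ (positive integers summing to $n$, $\ell(\mu)$ parts), let $D(\mu)=\{\mu_1,\mu_1+\mu_2,\dots,\mu_1+\cdots+\mu_{\ell-1}\}$; $\mathrm{bn}_0(\mu),\mathrm{bn}_1(\mu)\in\{0,1\}^{n-1}$ with $\mathrm{bn}_0(\mu)_j=1$ iff $j\in D(\mu)$ and $\mathrm{bn}_1(\mu)_j=1$ iff $j\notin D(\mu)$. $\chi^{\mathrm{bn}_0(\mu)}=x_1\otimes\cdots\otimes x_{n-1}\otimes\chi^{()}$ with $x_j=\mathbb{1}$ if $j\in D(\mu)$ and $x_j=\mathbf{reg}-\mathbb{1}$ otherwise (a supercharacter). For $a\in\{0,1\}^{n-1}$, $G^{n-1}_a=\{(g_1,\dots,g_{n-1},1): g_j\ne1\Rightarrow a_j=1\}$; thus $\mathrm{Ind}_{G^{n-1}_{\mathrm{bn}_1(\mu)}}^{G^{n-1}}(\mathbb{1})=y_1\otimes\cdots\otimes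 y_{n-1}\otimes\chi^{()}$ with $y_j=\mathbf{reg}$ if $j\in D(\mu)$ and $y_j=\mathbb{1}$ otherwise. $\nu$ refines $\lambda$ if $\lambda$ is obtained from $\nu$ by summing runs of consecutive parts. *)

theory Defs
  imports "HOL-Algebra.Group" Complex_Main "HOL-Library.Function_Algebras"
begin

text \<open>Elements of scf(G) are functions carrier G to complex numbers (zero outside the carrier).
 Elements of the Hopf algebra are functions on lists: the degree n component is a function on
 G^(n-1) = G x ... x G x {1}, i.e. on lists of length n whose last entry is the identity;
 the degree 0 component lives on the empty list (chi^emptyset).\<close>

definition sc_one :: "('a,'b) monoid_scheme \<Rightarrow> 'a \<Rightarrow> complex" where
  "sc_one G g = (if g \<in> carrier G then 1 else 0)"

definition sc_reg :: "('a,'b) monoid_scheme \<Rightarrow> 'a \<Rightarrow> complex" where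
  "sc_reg G g = (if g = \<one>\<^bsub>G\<^esub> then of_nat (card (carrier G)) else 0)"

definition sc_regm1 :: "('a,'b) monoid_scheme \<Rightarrow> 'a \<Rightarrow> complex" where
  "sc_regm1 G g = sc_reg G g - sc_one G g"

definition sc_regm1_dual :: "('a,'b) monoid_scheme \<Rightarrow> 'a \<Rightarrow> complex" where
  "sc_regm1_dual G g = sc_regm1 G g / (of_nat (card (carrier G)) - 1)"

definition scf :: "('a,'b) monoid_scheme \<Rightarrow> ('a \<Rightarrow> complex) set" where
  "scf G = {\<psi>. \<exists>a b. \<psi> = (\<lambda>g. a * sc_one G g + b * sc_reg G g)}"

definition inner :: "('a,'b) monoid_scheme \<Rightarrow> ('a \<Rightarrow> complex) \<Rightarrow> ('a \<Rightarrow> complex) \<Rightarrow> complex" where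
  "inner G \<psi> \<gamma> = (\<Sum>g\<in>carrier G. \<psi> g * cnj (\<gamma> g)) / of_nat (card (carrier G))"

definition scale :: "complex \<Rightarrow> ('a list \<Rightarrow> complex) \<Rightarrow> 'a list \<Rightarrow> complex" where
  "scale c f = (\<lambda>xs. c * f xs)"

definition chi_empty :: "'a list \<Rightarrow> complex" where
  "chi_empty xs = (if xs = [] then 1 else 0)"

definition tens :: "('a,'b) monoid_scheme \<Rightarrow> ('a \<Rightarrow> complex) list \<Rightarrow> 'a list \<Rightarrow> complex" where
  "tens G \<psi>s xs = (if length xs = Suc (length \<psi>s) \<and> set xs \<subseteq> carrier G \<and> last xs = \<one>\<^bsub>G\<^esub>
                    then (\<Prod>j<length \<psi>s. (\<psi>s ! j) (xs ! j)) else 0)"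

inductive_set Hspace :: "('a,'b) monoid_scheme \<Rightarrow> ('a list \<Rightarrow> complex) set" for G where
  zero: "(\<lambda>_. 0) \<in> Hspace G"
| unit: "chi_empty \<in> Hspace G"
| tens: "set \<psi>s \<subseteq> scf G \<Longrightarrow> tens G \<psi>s \<in> Hspace G"
| add: "f \<in> Hspace G \<Longrightarrow> h \<in> Hspace G \<Longrightarrow> (\<lambda>xs. f xs + h xs) \<in> Hspace G"
| smult: "f \<in> Hspace G \<Longrightarrow> scale c f \<in> Hspace G"

text \<open>Product of H_(iota,alpha,beta) (bilinear extension of the concatenation product
  inserting iota).\<close>
definition hmult :: "('a,'b) monoid_scheme \<Rightarrow> ('a \<Rightarrow> complex) \<Rightarrow> ('a list \<Rightarrow> complex)
    \<Rightarrow> ('a list \<Rightarrow> complex) \<Rightarrow> 'a list \<Rightarrow> complex" where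
  "hmult G \<iota> f h zs =
     (if zs = [] then f [] * h []
      else f [] * h zs + h [] * f zs
         + (\<Sum>j<length zs - 1. f (take j zs @ [\<one>\<^bsub>G\<^esub>]) * \<iota> (zs ! j) * h (drop (Suc j) zs)))"

definition hprod :: "('a,'b) monoid_scheme \<Rightarrow> ('a \<Rightarrow> complex) \<Rightarrow> ('a list \<Rightarrow> complex) list
    \<Rightarrow> 'a list \<Rightarrow> complex" where
  "hprod G \<iota> fs = foldr (hmult G \<iota>) fs chi_empty"

text \<open>psi^A for psi = psi_1 (x) ... (x) psi_(n-1) (x) chi^(), n = length psis + 1,
  A a subset of [n] = {1..n}, with respect to the pairing element alpha.\<close>
definition piece :: "('a,'b) monoid_scheme \<Rightarrow> ('a \<Rightarrow> complex) \<Rightarrow> ('a \<Rightarrow> complex)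
    \<Rightarrow> ('a \<Rightarrow> complex) list \<Rightarrow> nat set \<Rightarrow> 'a list \<Rightarrow> complex" where
  "piece G \<iota> \<alpha> \<psi>s A =
     (if A = {} then chi_empty
      else (let as = sorted_list_of_set A;
                k = length as;
                xs = map (\<lambda>i. if as ! (Suc i) = Suc (as ! i) then \<psi>s ! (as ! i - 1)
                               else (\<lambda>g. inner G (\<psi>s ! (as ! i - 1)) \<alpha> * \<iota> g)) [0..<k - 1];
                lam = (if last as < Suc (length \<psi>s) then inner G (\<psi>s ! (last as - 1)) \<alpha> else 1)
            in scale lam (tens G xs)))"

text \<open>S is the antipode of H_(iota,alpha,beta): a linear endomorphism of H with
  m o (S (x) id) o Delta = u o epsilon (checked on chi^emptyset and on the spanning
  pure tensors; the counit vanishes in positive degree).\<close>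
definition is_antipode :: "('a,'b) monoid_scheme \<Rightarrow> ('a \<Rightarrow> complex) \<Rightarrow> ('a \<Rightarrow> complex)
    \<Rightarrow> ('a \<Rightarrow> complex) \<Rightarrow> (('a list \<Rightarrow> complex) \<Rightarrow> ('a list \<Rightarrow> complex)) \<Rightarrow> bool" where
  "is_antipode G \<iota> \<alpha> \<beta> S \<longleftrightarrow>
     (\<forall>x\<in>Hspace G. S x \<in> Hspace G)
   \<and> (\<forall>x\<in>Hspace G. \<forall>y\<in>Hspace G. S (\<lambda>zs. x zs + y zs) = (\<lambda>zs. S x zs + S y zs))
   \<and> (\<forall>c. \<forall>x\<in>Hspace G. S (scale c x) = scale c (S x))
   \<and> S chi_empty = chi_empty
   \<and> (\<forall>\<psi>s. set \<psi>s \<subseteq> scf G \<longrightarrow>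
        (\<Sum>A\<in>Pow {1..Suc (length \<psi>s)}.
            hmult G \<iota> (S (piece G \<iota> \<alpha> \<psi>s A)) (piece G \<iota> \<beta> \<psi>s ({1..Suc (length \<psi>s)} - A)))
        = (\<lambda>_. 0))"

definition is_composition :: "nat \<Rightarrow> nat list \<Rightarrow> bool" where
  "is_composition n \<mu> \<longleftrightarrow> (\<forall>m\<in>set \<mu>. 0 < m) \<and> sum_list \<mu> = n"

definition descents :: "nat list \<Rightarrow> nat set" where
  "descents \<mu> = {sum_list (take i \<mu>) | i. 1 \<le> i \<and> i < length \<mu>}"

definition chi_bn0 :: "('a,'b) monoid_scheme \<Rightarrow> nat \<Rightarrow> nat list \<Rightarrow> 'a list \<Rightarrow> complex" where
  "chi_bn0 G n \<mu> = tens G (map (\<lambda>j. if j \<in> descents \<mu> then sc_one G else sc_regm1 G) [1..<n])"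

definition ind_bn1 :: "('a,'b) monoid_scheme \<Rightarrow> nat \<Rightarrow> nat list \<Rightarrow> 'a list \<Rightarrow> complex" where
  "ind_bn1 G n \<mu> = tens G (map (\<lambda>j. if j \<in> descents \<mu> then sc_reg G else sc_one G) [1..<n])"

definition refines :: "nat list \<Rightarrow> nat list \<Rightarrow> bool" where
  "refines \<nu> lam \<longleftrightarrow> (\<exists>bs. concat bs = \<nu> \<and> (\<forall>b\<in>set bs. b \<noteq> []) \<and> map sum_list bs = lam)"

end

theory Submission
  imports Defs
begin


definition Rl :: "bool list \<Rightarrow> bool list set" where
  "Rl L = {Y. length Y = length L \<and> list_all2 (\<lambda>l y. l \<longrightarrow> y) L Y}"
definition ntrue :: "bool list \<Rightarrow> nat" where "ntrue Y = length (filter id Y)"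
definition rb :: "bool list \<Rightarrow> bool list" where
  "rb X = (if X = [] then [] else rev (butlast X) @ [True])"
definition xl :: "bool list \<Rightarrow> bool list \<Rightarrow> bool list" where
  "xl m c = map (\<lambda>i. \<not>(Suc i < length m \<and> m!Suc i) \<or> c!i) (filter (\<lambda>i. m!i) [0..<length m])"
definition exok :: "bool list \<Rightarrow> bool list \<Rightarrow> bool" where
  "exok m c \<longleftrightarrow> (\<forall>i. Suc i < length m \<longrightarrow> m!i \<longrightarrow> \<not> m!Suc i \<longrightarrow> c!i)"
definition blk :: "nat \<Rightarrow> bool list" where "blk k = replicate k False @ [True]"
definition PP :: "nat \<Rightarrow> bool list" where "PP p = (if p = 0 then [] else blk (p - 1))"
definition QQ :: "nat \<Rightarrow> nat \<Rightarrow> bool list" where "QQ f p = (if p = f then [] else blk (f - p - 1))"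

lemma ntrue_simps[simp]: "ntrue [] = 0" "ntrue (x # xs) = (if x then Suc (ntrue xs) else ntrue xs)"
  "ntrue (xs @ ys) = ntrue xs + ntrue ys" "ntrue (replicate k False) = 0"
  by (auto simp: ntrue_def)

lemma finite_Rl[simp]: "finite (Rl L)"
proof -
  have "Rl L \<subseteq> {xs. set xs \<subseteq> UNIV \<and> length xs = length L}" by (auto simp: Rl_def)
  moreover have "finite {xs::bool list. set xs \<subseteq> UNIV \<and> length xs = length L}"
    by (rule finite_lists_length_eq) simp
  ultimately show ?thesis by (rule finite_subset)
qed

lemma Rl_append: "Rl (La @ Lb) = (\<lambda>(a, b). a @ b) ` (Rl La \<times> Rl Lb)"
proof (rule equalityI; rule subsetI)
  fix Y assume "Y \<in> Rl (La @ Lb)"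
  then have "list_all2 (\<lambda>l y. l \<longrightarrow> y) (La @ Lb) Y" by (simp add: Rl_def)
  then obtain us vs where "Y = us @ vs" "list_all2 (\<lambda>l y. l \<longrightarrow> y) La us"
      "list_all2 (\<lambda>l y. l \<longrightarrow> y) Lb vs"
    by (auto simp: list_all2_append1)
  then show "Y \<in> (\<lambda>(a, b). a @ b) ` (Rl La \<times> Rl Lb)"
    by (auto simp: Rl_def list_all2_lengthD intro!: image_eqI[of _ _ "(us, vs)"])
next
  fix Y assume "Y \<in> (\<lambda>(a, b). a @ b) ` (Rl La \<times> Rl Lb)"
  then show "Y \<in> Rl (La @ Lb)"
    by (auto simp: Rl_def list_all2_appendI)
qed

lemma Rl_append_sum:
  "(\<Sum>Y\<in>Rl (La @ Lb). \<phi> Y) = (\<Sum>Y1\<in>Rl La. \<Sum>Y2\<in>Rl Lb. \<phi> (Y1 @ Y2))"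
proof -
  have inj: "inj_on (\<lambda>(a, b). a @ b) (Rl La \<times> Rl Lb)"
    by (auto simp: inj_on_def Rl_def)
  have "(\<Sum>Y\<in>Rl (La @ Lb). \<phi> Y) = (\<Sum>x\<in>Rl La \<times> Rl Lb. \<phi> ((\<lambda>(a, b). a @ b) x))"
    unfolding Rl_append by (subst sum.reindex[OF inj]) (simp add: comp_def)
  also have "\<dots> = (\<Sum>Y1\<in>Rl La. \<Sum>Y2\<in>Rl Lb. \<phi> (Y1 @ Y2))"
    by (simp add: sum.cartesian_product split_def)
  finally show ?thesis .
qed

lemma Rl_Nil[simp]: "Rl [] = {[]}" by (auto simp: Rl_def)
lemma Rl_True[simp]: "Rl [True] = {[True]}"
  by (auto simp: Rl_def list_all2_Cons1)
lemma Rl_False[simp]: "Rl [False] = {[True], [False]}"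
  by (auto simp: Rl_def list_all2_Cons1)

lemma Rl_Cons_sum: "(\<Sum>Y\<in>Rl (l # L). \<phi> Y) = (\<Sum>Y1\<in>Rl [l]. \<Sum>Y2\<in>Rl L. \<phi> (Y1 @ Y2))"
  using Rl_append_sum[where La="[l]" and Lb=L and \<phi>=\<phi>] by simp

lemma Rl_blk_sum: "(\<Sum>Y\<in>Rl (blk k). \<phi> Y) = (\<Sum>Z\<in>Rl (replicate k False). \<phi> (Z @ [True]))"
  unfolding blk_def Rl_append_sum by simp

lemma Rl_repl_Suc_sum: "(\<Sum>Z\<in>Rl (replicate (Suc k) False). \<phi> Z)
   = (\<Sum>Z\<in>Rl (replicate k False). \<phi> (Z @ [True])) + (\<Sum>Z\<in>Rl (replicate k False). \<phi> (Z @ [False]))"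
proof -
  have "replicate (Suc k) False = replicate k False @ [False]" by (simp add: replicate_append_same)
  then show ?thesis by (simp add: Rl_append_sum sum.distrib)
qed

lemma decomp_sum:
  fixes \<phi> :: "bool list \<Rightarrow> 'v::comm_monoid_add"
  shows "(\<Sum>Z\<in>Rl (replicate k False). \<phi> Z)
    = (\<Sum>p\<le>k. \<Sum>Y\<in>Rl (PP p). \<phi> (Y @ replicate (k - p) False))"
proof (induction k arbitrary: \<phi>)
  case 0
  then show ?case by (simp add: PP_def)
next
  case (Suc k)
  have e: "\<And>p. p \<le> k \<Longrightarrow> replicate (k - p) False @ [False] = replicate (Suc k - p) False"
    by (simp add: Suc_diff_le replicate_append_same)
  have "(\<Sum>Z\<in>Rl (replicate (Suc k) False). \<phi> Z)
     = (\<Sum>Z\<in>Rl (replicate k False). \<phi> (Z @ [True])) + (\<Sum>Z\<in>Rl (replicate k False). \<phi> (Z @ [False]))"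
    by (rule Rl_repl_Suc_sum)
  also have "(\<Sum>Z\<in>Rl (replicate k False). \<phi> (Z @ [False]))
     = (\<Sum>p\<le>k. \<Sum>Y\<in>Rl (PP p). \<phi> (Y @ replicate (Suc k - p) False))"
    using Suc.IH[of "\<lambda>Z. \<phi> (Z @ [False])"] by (simp add: e)
  also have "(\<Sum>Z\<in>Rl (replicate k False). \<phi> (Z @ [True]))
     = (\<Sum>Y\<in>Rl (PP (Suc k)). \<phi> (Y @ replicate (Suc k - Suc k) False))"
    by (simp add: PP_def Rl_blk_sum)
  finally show ?case by (simp add: add.commute)
qed

lemma block_sum:
  fixes h :: "bool list \<Rightarrow> complex"
  assumes "f \<ge> 1"
  shows "(\<Sum>p\<le>f. \<Sum>Y\<in>Rl (PP p). (-1) ^ ntrue Y * h (Y @ QQ f p)) = 0"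
proof -
  obtain k where f: "f = Suc k" using assms by (cases f) auto
  have A: "(\<Sum>Y\<in>Rl (PP f). (-1) ^ ntrue Y * h (Y @ QQ f f))
      = - (\<Sum>Z\<in>Rl (replicate k False). (-1) ^ ntrue Z * h (Z @ [True]))"
    by (simp add: f PP_def QQ_def Rl_blk_sum sum_negf)
  have B: "(\<Sum>Z\<in>Rl (replicate k False). (-1) ^ ntrue Z * h (Z @ [True]))
      = (\<Sum>p\<le>k. \<Sum>Y\<in>Rl (PP p). (-1) ^ ntrue Y * h (Y @ QQ f p))"
    apply (subst decomp_sum)
    apply (rule sum.cong, simp)
    apply (rule sum.cong, simp)
    apply (auto simp: QQ_def f blk_def)
    done
  have "(\<Sum>p\<le>f. \<Sum>Y\<in>Rl (PP p). (-1) ^ ntrue Y * h (Y @ QQ f p))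
     = (\<Sum>p\<le>k. \<Sum>Y\<in>Rl (PP p). (-1) ^ ntrue Y * h (Y @ QQ f p))
      + (\<Sum>Y\<in>Rl (PP f). (-1) ^ ntrue Y * h (Y @ QQ f f))"
    by (simp add: f)
  then show ?thesis using A B by simp
qed


lemma sorted_le_last: "sorted xs \<Longrightarrow> x \<in> set xs \<Longrightarrow> x \<le> last xs"
  by (induction xs) (auto simp: last_ConsR)

lemma nth_append_lt[simp]: "i < length xs \<Longrightarrow> (xs @ ys) ! i = xs ! i"
  by (simp add: nth_append)

lemma xl_append:
  assumes "length m1 = length c1" "c1 \<noteq> []" "last c1" "length m2 = length c2"
  shows "xl (m1 @ m2) (c1 @ c2) = xl m1 c1 @ xl m2 c2"
proof -
  define a where "a = length m1"
  define b where "b = length m2"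
  have c1a: "c1 ! (a - 1) = True" using assms by (simp add: a_def last_conv_nth)
  have a0: "a > 0" using assms by (simp add: a_def)
  have up: "[0..<length (m1 @ m2)] = [0..<a] @ map (\<lambda>i. i + a) [0..<b]"
  proof -
    have "[0..<a + b] = [0..<a] @ [a..<a + b]" by (rule upt_add_eq_append) simp
    moreover have "map (\<lambda>i. i + a) [0..<b] = [a..<a + b]" by (simp add: map_add_upt add.commute)
    ultimately show ?thesis by (simp add: a_def b_def)
  qed
  have f1: "filter (\<lambda>i. (m1 @ m2) ! i) [0..<a] = filter (\<lambda>i. m1 ! i) [0..<a]"
    by (rule filter_cong) (auto simp: a_def)
  have f2: "filter (\<lambda>i. (m1 @ m2) ! i) (map (\<lambda>i. i + a) [0..<b])
      = map (\<lambda>i. i + a) (filter (\<lambda>i. m2 ! i) [0..<b])"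
    unfolding a_def by (simp add: filter_map comp_def nth_append)
  have g1: "map (\<lambda>i. \<not>(Suc i < length (m1 @ m2) \<and> (m1 @ m2) ! Suc i) \<or> (c1 @ c2) ! i) (filter (\<lambda>i. m1 ! i) [0..<a])
     = map (\<lambda>i. \<not>(Suc i < length m1 \<and> m1 ! Suc i) \<or> c1 ! i) (filter (\<lambda>i. m1 ! i) [0..<length m1])"
    unfolding a_def[symmetric]
  proof (rule map_cong[OF refl])
    fix i assume "i \<in> set (filter (\<lambda>i. m1 ! i) [0..<a])"
    then have i: "i < a" by simp
    show "(\<not>(Suc i < length (m1 @ m2) \<and> (m1 @ m2) ! Suc i) \<or> (c1 @ c2) ! i) = (\<not>(Suc i < a \<and> m1 ! Suc i) \<or> c1 ! i)"
    proof (cases "Suc i < a")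
      case True then show ?thesis using i assms by (simp add: a_def)
    next
      case False then have "i = a - 1" using i by simp
      then show ?thesis using c1a i assms by (simp add: a_def)
    qed
  qed
  have g2: "map (\<lambda>i. \<not>(Suc i < length (m1 @ m2) \<and> (m1 @ m2) ! Suc i) \<or> (c1 @ c2) ! i) (map (\<lambda>i. i + a) (filter (\<lambda>i. m2 ! i) [0..<b]))
     = map (\<lambda>i. \<not>(Suc i < length m2 \<and> m2 ! Suc i) \<or> c2 ! i) (filter (\<lambda>i. m2 ! i) [0..<length m2])"
  proof -
    have "\<And>i. (\<not>(Suc (i + a) < length (m1 @ m2) \<and> (m1 @ m2) ! Suc (i + a)) \<or> (c1 @ c2) ! (i + a))
       = (\<not>(Suc i < length m2 \<and> m2 ! Suc i) \<or> c2 ! i)"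
      using assms unfolding a_def by (simp add: nth_append)
    then show ?thesis by (simp add: b_def)
  qed
  show ?thesis
    unfolding xl_def up filter_append map_append f1 f2 g1 g2 ..
qed
lemma exok_append:
  assumes "length m1 = length c1" "c1 \<noteq> []" "last c1" "length m2 = length c2"
  shows "exok (m1 @ m2) (c1 @ c2) \<longleftrightarrow> exok m1 c1 \<and> exok m2 c2"
proof -
  define a where "a = length m1"
  have c1a: "c1 ! (a - 1) = True" using assms by (simp add: a_def last_conv_nth)
  have a0: "a > 0" using assms by (simp add: a_def)
  show ?thesis
  proof
    assume H: "exok (m1 @ m2) (c1 @ c2)"
    show "exok m1 c1 \<and> exok m2 c2"
    proof
      show "exok m1 c1" unfolding exok_def
      proof (intro allI impI)
        fix i assume "Suc i < length m1" "m1 ! i" "\<not> m1 ! Suc i"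
        then show "c1 ! i" using H[unfolded exok_def, rule_format, of i] assms by simp
      qed
      show "exok m2 c2" unfolding exok_def
      proof (intro allI impI)
        fix i assume "Suc i < length m2" "m2 ! i" "\<not> m2 ! Suc i"
        then show "c2 ! i" using H[unfolded exok_def, rule_format, of "i + a"] assms
          by (simp add: a_def nth_append)
      qed
    qed
  next
    assume H: "exok m1 c1 \<and> exok m2 c2"
    show "exok (m1 @ m2) (c1 @ c2)" unfolding exok_def
    proof (intro allI impI)
      fix i assume i: "Suc i < length (m1 @ m2)" "(m1 @ m2) ! i" "\<not> (m1 @ m2) ! Suc i"
      show "(c1 @ c2) ! i"
      proof (cases "Suc i < a")
        case True then show ?thesis using H i assms by (simp add: a_def exok_def)
      next
        case False
        show ?thesis
        proof (cases "i = a - 1")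
          case True then show ?thesis using c1a a0 assms by (simp add: a_def)
        next
          case False
          then have "i \<ge> a" using \<open>\<not> Suc i < a\<close> by simp
          define i' where "i' = i - a"
          have ii: "i = i' + a" using \<open>i \<ge> a\<close> by (simp add: i'_def)
          have "Suc i' < length m2" "m2 ! i'" "\<not> m2 ! Suc i'" using i assms
            by (simp_all add: ii a_def nth_append)
          then have "c2 ! i'" using H unfolding exok_def by blast
          then show ?thesis using assms by (simp add: ii a_def nth_append)
        qed
      qed
    qed
  qed
qed

lemma rb_blk: "X = [] \<or> last X \<Longrightarrow> rb (blk k @ X) = rb X @ blk k"
  by (auto simp: rb_def blk_def butlast_append)

lemma rb_PP: "X = [] \<or> last X \<Longrightarrow> rb (PP p @ X) = rb X @ PP p"
  by (auto simp: PP_def rb_blk)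

lemma filter_upt_last_le:
  assumes "j \<in> set (filter P [0..<n])" shows "j \<le> last (filter P [0..<n])"
proof (rule sorted_le_last[OF _ assms])
  show "sorted (filter P [0..<n])" by (rule sorted_wrt_filter) simp
qed

lemma xl_last:
  assumes "length m = length c" "c \<noteq> []" "last c" "xl m c \<noteq> []"
  shows "last (xl m c)"
proof -
  define fl where "fl = filter (\<lambda>i. m ! i) [0..<length m]"
  have ne: "fl \<noteq> []" using assms(4) by (simp add: xl_def fl_def)
  define j where "j = last fl"
  have jin: "j \<in> set fl" using ne by (simp add: j_def)
  then have jl: "j < length m" by (simp add: fl_def)
  have "\<not>(Suc j < length m \<and> m ! Suc j) \<or> c ! j"
  proof (cases "Suc j < length m \<and> m ! Suc j")
    case True
    then have "Suc j \<in> set fl" by (simp add: fl_def)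
    then have "Suc j \<le> j" unfolding j_def fl_def by (rule filter_upt_last_le)
    then show ?thesis by simp
  qed simp
  then show ?thesis using ne by (simp add: xl_def fl_def[symmetric] last_map j_def)
qed

lemma xl_end: "length m = length c \<Longrightarrow> c \<noteq> [] \<Longrightarrow> last c \<Longrightarrow> xl m c = [] \<or> last (xl m c)"
  using xl_last by blast

lemma length_xl: "length (xl m c) = length (filter (\<lambda>i. m ! i) [0..<length m])"
  by (simp add: xl_def)

lemma xl_all_True:
  assumes "length c = n" "c \<noteq> []" "last c"
  shows "xl (replicate n True) c = c"
proof -
  have "filter (\<lambda>i. replicate n True ! i) [0..<n] = [0..<n]" by (rule filter_True) simp
  moreover have "c ! (n - 1)" using assms by (simp add: last_conv_nth)
  moreover have "map (\<lambda>i. \<not>(Suc i < n \<and> replicate n True ! Suc i) \<or> c ! i) [0..<n] = c"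
  proof (rule nth_equalityI)
    show "length (map (\<lambda>i. \<not>(Suc i < n \<and> replicate n True ! Suc i) \<or> c ! i) [0..<n]) = length c"
      using assms by simp
    fix i assume "i < length (map (\<lambda>i. \<not>(Suc i < n \<and> replicate n True ! Suc i) \<or> c ! i) [0..<n])"
    then have i: "i < n" by simp
    show "map (\<lambda>i. \<not>(Suc i < n \<and> replicate n True ! Suc i) \<or> c ! i) [0..<n] ! i = c ! i"
    proof (cases "Suc i < n")
      case True then show ?thesis using i by simp
    next
      case False then have "i = n - 1" using i by simp
      then show ?thesis using i \<open>c ! (n - 1)\<close> by simp
    qed
  qed
  ultimately show ?thesis using assms by (simp add: xl_def)
qed

lemma xl_all_False: "xl (replicate n False) c = []"
  by (simp add: xl_def)

lemma length_xl_less: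
  assumes "length m = n" "m \<noteq> replicate n True"
  shows "length (xl m c) < n"
proof -
  have "\<exists>i<n. \<not> m ! i"
  proof (rule ccontr)
    assume "\<not> (\<exists>i<n. \<not> m ! i)"
    then have "m = replicate n True" using assms(1) by (auto intro!: nth_equalityI)
    then show False using assms(2) by simp
  qed
  then obtain i where "i < n" "\<not> m ! i" by blast
  then have "length (filter (\<lambda>i. m ! i) [0..<n]) < length [0..<n]"
    by (intro length_filter_less) auto
  then show ?thesis using assms by (simp add: length_xl)
qed


lemma Rl_repl: "Rl (replicate n False) = {m. length m = n}"
  by (auto simp: Rl_def list_all2_conv_all_nth)

lemma blk_nth: "i \<le> k \<Longrightarrow> blk k ! i = (i = k)"
  by (auto simp: blk_def nth_append)

lemma length_blk[simp]: "length (blk k) = Suc k" by (simp add: blk_def)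
lemma blk_ne[simp]: "blk k \<noteq> []" by (simp add: blk_def)
lemma last_blk[simp]: "last (blk k)" by (simp add: blk_def)
lemma ntrue_blk[simp]: "ntrue (blk k) = 1" by (simp add: blk_def)

definition mk :: "nat \<Rightarrow> nat \<Rightarrow> bool list" where
  "mk k p = replicate p True @ replicate (Suc k - p) False"

lemma all_False_repl: "\<forall>j. j < length l \<longrightarrow> \<not> l ! j \<Longrightarrow> l = replicate (length l) False"
  by (rule nth_equalityI) auto

lemma antitone_form:
  "(\<forall>i. Suc i < length m \<longrightarrow> \<not> m ! i \<longrightarrow> \<not> m ! Suc i) \<Longrightarrow>
   m = replicate (length (takeWhile id m)) True @ replicate (length m - length (takeWhile id m)) False"
proof (induction m)
  case Nil then show ?case by simp
next
  case (Cons x m)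
  have h: "\<forall>i. Suc i < length m \<longrightarrow> \<not> m ! i \<longrightarrow> \<not> m ! Suc i"
    using Cons.prems by (auto dest: spec[of _ "Suc _"])
  show ?case
  proof (cases x)
    case True then show ?thesis using Cons.IH[OF h] by simp
  next
    case False
    have "\<forall>j. j < length (x # m) \<longrightarrow> \<not> (x # m) ! j"
    proof (intro allI)
      fix j show "j < length (x # m) \<longrightarrow> \<not> (x # m) ! j"
        using Cons.prems False by (induction j) (auto simp del: nth_Cons_Suc)
    qed
    then have "x # m = replicate (length (x # m)) False"
      by (rule all_False_repl)
    then show ?thesis using False by simp
  qed
qed

lemma V2set: "{m \<in> Rl (replicate (Suc k) False). exok (map Not m) (blk k)} = mk k ` {..Suc k}"
proof (rule equalityI; rule subsetI)
  fix m assume "m \<in> {m \<in> Rl (replicate (Suc k) False). exok (map Not m) (blk k)}"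
  then have l: "length m = Suc k" and e: "exok (map Not m) (blk k)" unfolding Rl_repl by auto
  have "\<forall>i. Suc i < length m \<longrightarrow> \<not> m ! i \<longrightarrow> \<not> m ! Suc i"
  proof (intro allI impI)
    fix i assume "Suc i < length m" "\<not> m ! i"
    then show "\<not> m ! Suc i" using e l blk_nth[of i k] by (auto simp: exok_def)
  qed
  from antitone_form[OF this] have "m = mk k (length (takeWhile id m))"
    using l by (simp add: mk_def)
  moreover have "length (takeWhile id m) \<le> Suc k" using l
    by (metis length_takeWhile_le)
  ultimately show "m \<in> mk k ` {..Suc k}" by blast
next
  fix m assume "m \<in> mk k ` {..Suc k}"
  then obtain p where p: "p \<le> Suc k" "m = mk k p" by auto
  have "exok (map Not m) (blk k)" unfolding exok_def
  proof (intro allI impI)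
    fix i assume "Suc i < length (map Not m)" "map Not m ! i" "\<not> map Not m ! Suc i"
    then show "blk k ! i" using p by (auto simp: mk_def nth_append split: if_splits)
  qed
  then show "m \<in> {m \<in> Rl (replicate (Suc k) False). exok (map Not m) (blk k)}"
    unfolding Rl_repl using p by (simp add: mk_def)
qed

lemma inj_mk: "inj_on (mk k) {..Suc k}"
proof (rule inj_onI)
  fix p q assume "p \<in> {..Suc k}" "q \<in> {..Suc k}" "mk k p = mk k q"
  then have "ntrue (mk k p) = ntrue (mk k q)" by simp
  then show "p = q" by (simp add: mk_def ntrue_def)
qed

lemma exok_repl: "exok (replicate n b) c"
  by (simp add: exok_def)

lemma V1set: "{m \<in> Rl (replicate (Suc k) False). exok m (blk k) \<and> exok (map Not m) (blk k)}
   = {replicate (Suc k) True, replicate (Suc k) False}"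
proof (rule equalityI; rule subsetI)
  fix m assume "m \<in> {m \<in> Rl (replicate (Suc k) False). exok m (blk k) \<and> exok (map Not m) (blk k)}"
  then have l: "length m = Suc k" and e: "exok m (blk k)" "exok (map Not m) (blk k)"
    unfolding Rl_repl by auto
  have st: "\<forall>i. Suc i < length m \<longrightarrow> m ! Suc i = m ! i"
  proof (intro allI impI)
    fix i assume "Suc i < length m"
    then show "m ! Suc i = m ! i" using e l blk_nth[of i k] by (auto simp: exok_def)
  qed
  have "\<forall>i. i < length m \<longrightarrow> m ! i = m ! 0"
  proof (intro allI)
    fix i show "i < length m \<longrightarrow> m ! i = m ! 0"
      using st by (induction i) auto
  qed
  then have "m = replicate (length m) (m ! 0)" by (intro nth_equalityI) auto
  then have "m = replicate (Suc k) (m ! 0)" using l by simp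
  then show "m \<in> {replicate (Suc k) True, replicate (Suc k) False}"
    by (cases "m ! 0") simp_all
next
  fix m assume "m \<in> {replicate (Suc k) True, replicate (Suc k) False}"
  then show "m \<in> {m \<in> Rl (replicate (Suc k) False). exok m (blk k) \<and> exok (map Not m) (blk k)}"
    unfolding Rl_repl by (auto simp only: exok_repl map_replicate length_replicate mem_Collect_eq)
qed

lemma filter_mk: "p \<le> Suc k \<Longrightarrow> filter (\<lambda>i. mk k p ! i) [0..<Suc k] = [0..<p]"
proof -
  assume p: "p \<le> Suc k"
  have "[0..<Suc k] = [0..<p] @ [p..<Suc k]" using p
    by (metis le_add_diff_inverse upt_add_eq_append zero_le)
  moreover have "filter (\<lambda>i. mk k p ! i) [0..<p] = [0..<p]"
    by (rule filter_True) (auto simp: mk_def nth_append)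
  moreover have "filter (\<lambda>i. mk k p ! i) [p..<Suc k] = []"
    using p by (auto simp: filter_empty_conv mk_def nth_append)
  ultimately show ?thesis by simp
qed

lemma filter_mk_Not: "p \<le> Suc k \<Longrightarrow> filter (\<lambda>i. map Not (mk k p) ! i) [0..<Suc k] = [p..<Suc k]"
proof -
  assume p: "p \<le> Suc k"
  have "[0..<Suc k] = [0..<p] @ [p..<Suc k]" using p
    by (metis le_add_diff_inverse upt_add_eq_append zero_le)
  moreover have "filter (\<lambda>i. map Not (mk k p) ! i) [0..<p] = []"
    using p by (auto simp: filter_empty_conv mk_def nth_append)
  moreover have "filter (\<lambda>i. map Not (mk k p) ! i) [p..<Suc k] = [p..<Suc k]"
    using p by (intro filter_True) (auto simp: mk_def nth_append)
  ultimately show ?thesis by simp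
qed

lemma length_mk[simp]: "p \<le> Suc k \<Longrightarrow> length (mk k p) = Suc k" by (simp add: mk_def)

lemma xl_mk: assumes "p \<le> Suc k" shows "xl (mk k p) (blk k) = PP p"
proof -
  have "xl (mk k p) (blk k) = map (\<lambda>i. \<not>(Suc i < Suc k \<and> mk k p ! Suc i) \<or> blk k ! i) [0..<p]"
    unfolding xl_def using assms by (simp only: length_mk filter_mk)
  also have "\<dots> = PP p"
  proof (rule nth_equalityI)
    show "length (map (\<lambda>i. \<not>(Suc i < Suc k \<and> mk k p ! Suc i) \<or> blk k ! i) [0..<p]) = length (PP p)"
      by (simp add: PP_def)
    fix i assume "i < length (map (\<lambda>i. \<not>(Suc i < Suc k \<and> mk k p ! Suc i) \<or> blk k ! i) [0..<p])"
    then have i: "i < p" by simp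
    then have pp: "PP p ! i = (i = p - 1)" by (auto simp: PP_def blk_def nth_append)
    show "map (\<lambda>i. \<not>(Suc i < Suc k \<and> mk k p ! Suc i) \<or> blk k ! i) [0..<p] ! i = PP p ! i"
    proof (cases "Suc i < p")
      case True
      then show ?thesis using i assms pp blk_nth[of i k] by (simp add: mk_def nth_append)
    next
      case False
      then have "i = p - 1" using i by simp
      then show ?thesis using i assms pp by (auto simp: mk_def nth_append)
    qed
  qed
  finally show ?thesis .
qed

lemma xl_mk_Not: assumes "p \<le> Suc k" shows "xl (map Not (mk k p)) (blk k) = QQ (Suc k) p"
proof -
  have "xl (map Not (mk k p)) (blk k) = map (\<lambda>i. \<not>(Suc i < Suc k \<and> map Not (mk k p) ! Suc i) \<or> blk k ! i) [p..<Suc k]"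
    unfolding xl_def using assms by (simp only: length_map length_mk filter_mk_Not)
  also have "\<dots> = map (\<lambda>i. i = k) [p..<Suc k]"
    using assms by (intro map_cong) (auto simp: mk_def nth_append blk_nth)
  also have "\<dots> = QQ (Suc k) p"
  proof (cases "p = Suc k")
    case True then show ?thesis by (simp add: QQ_def)
  next
    case False
    then have "[p..<Suc k] = [p..<k] @ [k]" using assms by simp
    moreover have "map (\<lambda>i. i = k) [p..<k] = map (\<lambda>i. False) [p..<k]" by (rule map_cong) auto
    ultimately show ?thesis using False assms by (simp add: QQ_def blk_def map_replicate_const)
  qed
  finally show ?thesis .
qed

lemma first_block: "c \<noteq> [] \<Longrightarrow> last c \<Longrightarrow> \<exists>k c2. c = blk k @ c2 \<and> (c2 = [] \<or> last c2)"
proof (induction c)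
  case Nil then show ?case by simp
next
  case (Cons x c)
  show ?case
  proof (cases x)
    case True then show ?thesis using Cons.prems
      by (intro exI[of _ 0] exI[of _ c]) (auto simp: blk_def split: if_splits)
  next
    case False
    have "c \<noteq> []" using Cons.prems(2) False by (cases c) auto
    moreover have "last c" using Cons.prems(2) \<open>c \<noteq> []\<close> by simp
    ultimately obtain k c2 where "c = blk k @ c2" "c2 = [] \<or> last c2" using Cons.IH by blast
    then show ?thesis using False
      by (intro exI[of _ "Suc k"] exI[of _ c2]) (simp add: blk_def)
  qed
qed

lemma xl_end':
  assumes "length m = length c" "c = [] \<or> last c" shows "xl m c = [] \<or> last (xl m c)"
proof (cases "c = []")
  case True then show ?thesis using assms by (simp add: xl_def)
next
  case False then show ?thesis using xl_end assms by blast
qed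


lemma split_masks_sum:
  "(\<Sum>m\<in>Rl (replicate (a + b) False). \<phi> m)
   = (\<Sum>m1\<in>Rl (replicate a False). \<Sum>m2\<in>Rl (replicate b False). \<phi> (m1 @ m2))"
  by (simp add: replicate_add Rl_append_sum)

lemma ID2:
  fixes g :: "bool list \<Rightarrow> complex"
  assumes "c \<noteq> []" "last c"
  shows "(\<Sum>m\<in>Rl (replicate (length c) False).
            if exok (map Not m) c
            then (\<Sum>Y\<in>Rl (rb (xl m c)). (-1) ^ ntrue Y * g (Y @ xl (map Not m) c))
            else 0) = 0"
proof -
  obtain k c2 where c: "c = blk k @ c2" and c2: "c2 = [] \<or> last c2"
    using first_block[OF assms] by blast
  define F where "F m = (if exok (map Not m) c
            then (\<Sum>Y\<in>Rl (rb (xl m c)). (-1) ^ ntrue Y * g (Y @ xl (map Not m) c))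
            else (0::complex))" for m
  have "(\<Sum>m\<in>Rl (replicate (length c) False). F m)
      = (\<Sum>m1\<in>Rl (replicate (Suc k) False). \<Sum>m2\<in>Rl (replicate (length c2) False). F (m1 @ m2))"
    using split_masks_sum[of F "Suc k" "length c2"] by (simp add: c)
  also have "\<dots> = (\<Sum>m2\<in>Rl (replicate (length c2) False). \<Sum>m1\<in>Rl (replicate (Suc k) False). F (m1 @ m2))"
    by (rule sum.swap)
  also have "\<dots> = (\<Sum>m2\<in>Rl (replicate (length c2) False). 0)"
  proof (rule sum.cong[OF refl])
    fix m2 assume "m2 \<in> Rl (replicate (length c2) False)"
    then have l2: "length m2 = length c2" by (simp add: Rl_repl)
    define X2 where "X2 = xl m2 c2"
    define XB2 where "XB2 = xl (map Not m2) c2"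
    have X2e: "X2 = [] \<or> last X2" unfolding X2_def using l2 c2 by (rule xl_end')
    have Fm: "F (m1 @ m2) = (if exok (map Not m1) (blk k) \<and> exok (map Not m2) c2
            then (\<Sum>Y\<in>Rl (rb (xl m1 (blk k) @ X2)). (-1) ^ ntrue Y * g (Y @ xl (map Not m1) (blk k) @ XB2))
            else 0)" if "m1 \<in> Rl (replicate (Suc k) False)" for m1
    proof -
      have l1: "length m1 = Suc k" using that unfolding Rl_repl by simp
      show ?thesis unfolding F_def c map_append X2_def XB2_def
        using l1 l2 by (simp add: exok_append xl_append)
    qed
    show "(\<Sum>m1\<in>Rl (replicate (Suc k) False). F (m1 @ m2)) = 0"
    proof (cases "exok (map Not m2) c2")
      case False then show ?thesis using Fm by simp
    next
      case True
      have "(\<Sum>m1\<in>Rl (replicate (Suc k) False). F (m1 @ m2))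
         = (\<Sum>m1\<in>Rl (replicate (Suc k) False). if exok (map Not m1) (blk k) then
             (\<Sum>Y\<in>Rl (rb (xl m1 (blk k) @ X2)). (-1) ^ ntrue Y * g (Y @ xl (map Not m1) (blk k) @ XB2))
             else 0)"
        using True Fm by (intro sum.cong) auto
      also have "\<dots> = (\<Sum>m1\<in>{m \<in> Rl (replicate (Suc k) False). exok (map Not m) (blk k)}.
             (\<Sum>Y\<in>Rl (rb (xl m1 (blk k) @ X2)). (-1) ^ ntrue Y * g (Y @ xl (map Not m1) (blk k) @ XB2)))"
        by (simp add: sum.inter_filter)
      also have "\<dots> = (\<Sum>p\<le>Suc k.
             (\<Sum>Y\<in>Rl (rb (PP p @ X2)). (-1) ^ ntrue Y * g (Y @ QQ (Suc k) p @ XB2)))"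
        unfolding V2set by (subst sum.reindex[OF inj_mk]) (simp add: xl_mk xl_mk_Not)
      also have "\<dots> = (\<Sum>p\<le>Suc k. \<Sum>Y1\<in>Rl (rb X2). \<Sum>Y2\<in>Rl (PP p).
             (-1) ^ ntrue Y1 * ((-1) ^ ntrue Y2 * g (Y1 @ Y2 @ QQ (Suc k) p @ XB2)))"
        by (simp add: rb_PP[OF X2e] Rl_append_sum power_add mult.assoc)
      also have "\<dots> = (\<Sum>Y1\<in>Rl (rb X2). \<Sum>p\<le>Suc k. \<Sum>Y2\<in>Rl (PP p).
             (-1) ^ ntrue Y1 * ((-1) ^ ntrue Y2 * g (Y1 @ Y2 @ QQ (Suc k) p @ XB2)))"
        by (rule sum.swap)
      also have "\<dots> = (\<Sum>Y1\<in>Rl (rb X2). (-1) ^ ntrue Y1 * (\<Sum>p\<le>Suc k. \<Sum>Y2\<in>Rl (PP p).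
             (-1) ^ ntrue Y2 * g (Y1 @ Y2 @ QQ (Suc k) p @ XB2)))"
        by (simp only: sum_distrib_left)
      also have "\<dots> = 0"
        using block_sum[of "Suc k" "\<lambda>Z. g (Y1 @ Z @ XB2)" for Y1] by simp
      finally show ?thesis .
    qed
  qed
  finally show ?thesis unfolding F_def by simp
qed

lemma ID1:
  fixes g :: "bool list \<Rightarrow> complex"
  assumes "c \<noteq> []" "last c"
  shows "(\<Sum>m\<in>Rl (replicate (length c) False).
            if exok m c \<and> exok (map Not m) c
            then (-1) ^ ntrue (xl m c) * g (rb (xl m c) @ xl (map Not m) c)
            else 0) = 0"
proof -
  obtain k c2 where c: "c = blk k @ c2" and c2: "c2 = [] \<or> last c2"
    using first_block[OF assms] by blast
  define F where "F m = (if exok m c \<and> exok (map Not m) c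
            then (-1) ^ ntrue (xl m c) * g (rb (xl m c) @ xl (map Not m) c)
            else (0::complex))" for m
  have "(\<Sum>m\<in>Rl (replicate (length c) False). F m)
      = (\<Sum>m1\<in>Rl (replicate (Suc k) False). \<Sum>m2\<in>Rl (replicate (length c2) False). F (m1 @ m2))"
    using split_masks_sum[of F "Suc k" "length c2"] by (simp add: c)
  also have "\<dots> = (\<Sum>m2\<in>Rl (replicate (length c2) False). \<Sum>m1\<in>Rl (replicate (Suc k) False). F (m1 @ m2))"
    by (rule sum.swap)
  also have "\<dots> = (\<Sum>m2\<in>Rl (replicate (length c2) False). 0)"
  proof (rule sum.cong[OF refl])
    fix m2 assume "m2 \<in> Rl (replicate (length c2) False)"
    then have l2: "length m2 = length c2" by (simp add: Rl_repl)
    define X2 where "X2 = xl m2 c2"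
    define XB2 where "XB2 = xl (map Not m2) c2"
    have X2e: "X2 = [] \<or> last X2" unfolding X2_def using l2 c2 by (rule xl_end')
    have Fm: "F (m1 @ m2) = (if (exok m1 (blk k) \<and> exok (map Not m1) (blk k)) \<and> (exok m2 c2 \<and> exok (map Not m2) c2)
            then (-1) ^ ntrue (xl m1 (blk k) @ X2) * g (rb (xl m1 (blk k) @ X2) @ xl (map Not m1) (blk k) @ XB2)
            else 0)" if "m1 \<in> Rl (replicate (Suc k) False)" for m1
    proof -
      have l1: "length m1 = Suc k" using that unfolding Rl_repl by simp
      show ?thesis unfolding F_def c map_append X2_def XB2_def
        using l1 l2 by (simp add: exok_append xl_append conj_ac)
    qed
    show "(\<Sum>m1\<in>Rl (replicate (Suc k) False). F (m1 @ m2)) = 0"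
    proof (cases "exok m2 c2 \<and> exok (map Not m2) c2")
      case False then show ?thesis using Fm by (intro sum.neutral ballI) auto
    next
      case True
      have "(\<Sum>m1\<in>Rl (replicate (Suc k) False). F (m1 @ m2))
         = (\<Sum>m1\<in>Rl (replicate (Suc k) False). if exok m1 (blk k) \<and> exok (map Not m1) (blk k) then
             (-1) ^ ntrue (xl m1 (blk k) @ X2) * g (rb (xl m1 (blk k) @ X2) @ xl (map Not m1) (blk k) @ XB2)
             else 0)"
        using True Fm by (intro sum.cong) auto
      also have "\<dots> = (\<Sum>m1\<in>{m \<in> Rl (replicate (Suc k) False). exok m (blk k) \<and> exok (map Not m) (blk k)}.
             (-1) ^ ntrue (xl m1 (blk k) @ X2) * g (rb (xl m1 (blk k) @ X2) @ xl (map Not m1) (blk k) @ XB2))"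
        by (rule sum.inter_filter[symmetric]) simp
      also have "\<dots> = (-1) ^ ntrue (blk k @ X2) * g (rb (blk k @ X2) @ [] @ XB2)
          + (-1) ^ ntrue ([] @ X2) * g (rb ([] @ X2) @ blk k @ XB2)"
      proof -
        have d: "replicate (Suc k) True \<noteq> replicate (Suc k) False" by simp
        have x1: "xl (replicate (Suc k) True) (blk k) = blk k"
          by (rule xl_all_True) simp_all
        have x2: "xl (replicate (Suc k) False) (blk k) = []" by (rule xl_all_False)
        show ?thesis unfolding V1set using d
          by (simp add: x1 x2 map_replicate del: replicate_Suc)
      qed
      also have "\<dots> = 0" by (simp add: rb_blk[OF X2e])
      finally show ?thesis .
    qed
  qed
  finally show ?thesis unfolding F_def by simp
qed


lemma sum_fun_apply: "(\<Sum>x\<in>A. f x) (zs::'z) = (\<Sum>x\<in>A. f x zs)"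
  by (induction A rule: infinite_finite_induct) auto

lemma hmult_unit_right[simp]: "hmult G \<iota> f chi_empty = f"
proof
  fix zs show "hmult G \<iota> f chi_empty zs = f zs"
    by (cases "zs = []") (auto simp: hmult_def chi_empty_def intro!: sum.neutral)
qed

lemma hmult_unit_left[simp]: "hmult G \<iota> chi_empty h = h"
proof
  fix zs show "hmult G \<iota> chi_empty h zs = h zs"
    by (cases "zs = []") (auto simp: hmult_def chi_empty_def intro!: sum.neutral)
qed

lemma hmult_scale_left: "hmult G \<iota> (scale c f) h = scale c (hmult G \<iota> f h)"
  by (auto simp: hmult_def scale_def fun_eq_iff sum_distrib_left algebra_simps)

lemma hmult_zero_left[simp]: "hmult G \<iota> (\<lambda>_. 0) h = (\<lambda>_. 0)"
  by (auto simp: hmult_def fun_eq_iff)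

lemma hmult_zero_right[simp]: "hmult G \<iota> f (\<lambda>_. 0) = (\<lambda>_. 0)"
  by (auto simp: hmult_def fun_eq_iff)

lemma hmult_sum_left:
  "hmult G \<iota> (\<lambda>zs. \<Sum>Y\<in>R. a Y * f Y zs) h zs = (\<Sum>Y\<in>R. a Y * hmult G \<iota> (f Y) h zs)"
  by (auto simp: hmult_def sum_distrib_left sum_distrib_right sum.distrib algebra_simps
      intro: sum.swap)

lemma tens_Nil_arg[simp]: "tens G xs [] = 0"
  by (simp add: tens_def)

lemma prod_lessThan_add:
  fixes f :: "nat \<Rightarrow> 'c::comm_monoid_mult"
  shows "(\<Prod>j<a + b. f j) = (\<Prod>j<a. f j) * (\<Prod>j<b. f (a + j))"
  by (induction b) (simp_all add: mult.assoc)

lemma prod_split_append: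
  "(\<Prod>j<length xs + Suc (length ys). ((xs @ [\<iota>] @ ys) ! j) (zs ! j))
   = (\<Prod>j<length xs. (xs ! j) (zs ! j)) * \<iota> (zs ! length xs)
     * (\<Prod>j<length ys. (ys ! j) (zs ! (Suc (length xs) + j)))"
proof -
  have "(\<Prod>j<length xs + Suc (length ys). ((xs @ [\<iota>] @ ys) ! j) (zs ! j))
     = (\<Prod>j<length xs. ((xs @ [\<iota>] @ ys) ! j) (zs ! j))
       * (\<Prod>j<Suc (length ys). ((xs @ [\<iota>] @ ys) ! (length xs + j)) (zs ! (length xs + j)))"
    by (rule prod_lessThan_add)
  also have "(\<Prod>j<length xs. ((xs @ [\<iota>] @ ys) ! j) (zs ! j)) = (\<Prod>j<length xs. (xs ! j) (zs ! j))"
    by (rule prod.cong) (auto simp: nth_append)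
  also have "(\<Prod>j<Suc (length ys). ((xs @ [\<iota>] @ ys) ! (length xs + j)) (zs ! (length xs + j)))
     = \<iota> (zs ! length xs) * (\<Prod>j<length ys. (ys ! j) (zs ! (Suc (length xs) + j)))"
    by (subst prod.lessThan_Suc_shift) (simp add: nth_append)
  finally show ?thesis by (simp add: mult.assoc)
qed


lemma hmult_tens:
  assumes G: "group G" and io: "\<forall>g. g \<notin> carrier G \<longrightarrow> \<iota> g = 0"
  shows "hmult G \<iota> (tens G xs) (tens G ys) = tens G (xs @ [\<iota>] @ ys)"
proof
  fix zs
  define a where "a = length xs"
  define T where "T = tens G xs (take a zs @ [\<one>\<^bsub>G\<^esub>]) * \<iota> (zs ! a) * tens G ys (drop (Suc a) zs)"
  have one: "\<one>\<^bsub>G\<^esub> \<in> carrier G" using G by (simp add: group.is_monoid monoid.one_closed)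
  show "hmult G \<iota> (tens G xs) (tens G ys) zs = tens G (xs @ [\<iota>] @ ys) zs"
  proof (cases "zs = []")
    case True then show ?thesis by (simp add: hmult_def tens_def)
  next
    case False
    have "hmult G \<iota> (tens G xs) (tens G ys) zs
        = (\<Sum>j<length zs - 1. tens G xs (take j zs @ [\<one>\<^bsub>G\<^esub>]) * \<iota> (zs ! j) * tens G ys (drop (Suc j) zs))"
      using False by (simp add: hmult_def)
    also have "\<dots> = (\<Sum>j<length zs - 1. if j = a then T else 0)"
    proof (rule sum.cong[OF refl])
      fix j assume j: "j \<in> {..<length zs - 1}"
      show "tens G xs (take j zs @ [\<one>\<^bsub>G\<^esub>]) * \<iota> (zs ! j) * tens G ys (drop (Suc j) zs) = (if j = a then T else 0)"
      proof (cases "j = a")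
        case True then show ?thesis by (simp add: T_def)
      next
        case False
        then have "tens G xs (take j zs @ [\<one>\<^bsub>G\<^esub>]) = 0" using j by (simp add: tens_def a_def)
        then show ?thesis using False by simp
      qed
    qed
    also have "\<dots> = (if a < length zs - 1 then T else 0)" by simp
    finally have L: "hmult G \<iota> (tens G xs) (tens G ys) zs = (if a < length zs - 1 then T else 0)" .
    show ?thesis
    proof (cases "length zs = Suc (length (xs @ [\<iota>] @ ys)) \<and> set zs \<subseteq> carrier G \<and> last zs = \<one>\<^bsub>G\<^esub>")
      case True
      then have lz: "length zs = a + length ys + 2" and sz: "set zs \<subseteq> carrier G"
        and lst: "last zs = \<one>\<^bsub>G\<^esub>" by (auto simp: a_def)
      have al: "a < length zs - 1" using lz by simp
      have t1: "tens G xs (take a zs @ [\<one>\<^bsub>G\<^esub>]) = (\<Prod>j<a. (xs ! j) (zs ! j))"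
      proof -
        have "set (take a zs) \<subseteq> carrier G" using sz by (meson order_trans set_take_subset)
        then have "tens G xs (take a zs @ [\<one>\<^bsub>G\<^esub>]) = (\<Prod>j<a. (xs ! j) ((take a zs @ [\<one>\<^bsub>G\<^esub>]) ! j))"
          using one lz by (simp add: tens_def a_def)
        also have "\<dots> = (\<Prod>j<a. (xs ! j) (zs ! j))"
          using lz by (intro prod.cong) (auto simp: nth_append)
        finally show ?thesis .
      qed
      have t2: "tens G ys (drop (Suc a) zs) = (\<Prod>j<length ys. (ys ! j) (zs ! (Suc a + j)))"
      proof -
        have "set (drop (Suc a) zs) \<subseteq> carrier G" using sz by (meson order_trans set_drop_subset)
        moreover have "last (drop (Suc a) zs) = \<one>\<^bsub>G\<^esub>" using lz lst by (simp add: last_drop)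
        ultimately show ?thesis using lz by (simp add: tens_def)
      qed
      have "tens G (xs @ [\<iota>] @ ys) zs = (\<Prod>j<length xs + Suc (length ys). ((xs @ [\<iota>] @ ys) ! j) (zs ! j))"
        using True by (simp add: tens_def)
      also have "\<dots> = T" unfolding prod_split_append T_def t1 t2 by (simp add: a_def)
      finally show ?thesis using L al by simp
    next
      case False
      have "T = 0"
      proof (rule ccontr)
        assume T0: "T \<noteq> 0"
        then have c1: "length (take a zs @ [\<one>\<^bsub>G\<^esub>]) = Suc (length xs)"
          and c2: "set (take a zs) \<subseteq> carrier G"
          and c3: "length (drop (Suc a) zs) = Suc (length ys)"
          and c4: "set (drop (Suc a) zs) \<subseteq> carrier G"
          and c5: "last (drop (Suc a) zs) = \<one>\<^bsub>G\<^esub>"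
          and c6: "\<iota> (zs ! a) \<noteq> 0"
          unfolding T_def tens_def by (auto split: if_splits)
        have za: "zs ! a \<in> carrier G" using c6 io by blast
        have lz: "length zs = Suc (length (xs @ [\<iota>] @ ys))" using c3 by (simp add: a_def)
        have al: "a < length zs" using lz by (simp add: a_def)
        have "zs = take a zs @ zs ! a # drop (Suc a) zs" using al by (simp add: id_take_nth_drop)
        then have "set zs \<subseteq> carrier G" using c2 c4 za
          by (metis Un_subset_iff insert_subset list.simps(15) set_append)
        moreover have "last zs = \<one>\<^bsub>G\<^esub>" using c5 c3 by (simp add: last_drop)
        ultimately show False using False lz by simp
      qed
      moreover have "tens G (xs @ [\<iota>] @ ys) zs = 0"
        unfolding tens_def using False by (rule if_not_P)
      ultimately show ?thesis using L by simp
    qed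
  qed
qed


definition setof :: "bool list \<Rightarrow> nat set" where
  "setof m = {Suc i | i. i < length m \<and> m ! i}"

lemma setof_eq: "setof m = set (map Suc (filter (\<lambda>i. m ! i) [0..<length m]))"
  by (auto simp: setof_def)

lemma sorted_fl: "sorted_wrt (<) (filter P [0..<n])"
  by (rule sorted_wrt_filter) (rule sorted_wrt_upt)

lemma sorted_setof: "sorted_list_of_set (setof m) = map Suc (filter (\<lambda>i. m ! i) [0..<length m])"
proof -
  have s: "sorted_wrt (<) (map Suc (filter (\<lambda>i. m ! i) [0..<length m]))"
    using sorted_fl[of "\<lambda>i. m ! i" "length m"] by (simp add: sorted_wrt_map)
  then have "sorted (map Suc (filter (\<lambda>i. m ! i) [0..<length m]))"
    "distinct (map Suc (filter (\<lambda>i. m ! i) [0..<length m]))"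
    using strict_sorted_iff by blast+
  then show ?thesis unfolding setof_eq sorted_list_of_set_sort_remdups
    by (simp add: distinct_remdups_id sorted_sort_id)
qed

lemma strict_next:
  assumes s: "sorted_wrt (<) xs" and i: "Suc i < length xs"
  shows "xs ! Suc i = Suc (xs ! i) \<longleftrightarrow> Suc (xs ! i) \<in> set xs"
proof
  assume "xs ! Suc i = Suc (xs ! i)"
  then show "Suc (xs ! i) \<in> set xs" using i by (metis nth_mem)
next
  assume "Suc (xs ! i) \<in> set xs"
  then obtain j where j: "j < length xs" "xs ! j = Suc (xs ! i)" by (auto simp: in_set_conv_nth)
  have lt: "\<And>a b. a < b \<Longrightarrow> b < length xs \<Longrightarrow> xs ! a < xs ! b"
    using s by (simp add: sorted_wrt_iff_nth_less)
  have "\<not> j < i" using lt[of j i] j i by auto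
  moreover have "j \<noteq> i" using j by auto
  moreover have "\<not> Suc i < j" using lt[of "Suc i" j] lt[of i "Suc i"] j i by auto
  ultimately have "j = Suc i" by auto
  then show "xs ! Suc i = Suc (xs ! i)" using j by simp
qed

lemma piece_explicit:
  assumes l: "length m = length c" "length c = Suc (length \<psi>s)" and ps: "\<psi>s = map Lt (butlast c)"
    and ne: "\<exists>i<length m. m ! i"
  shows "piece G \<iota> \<alpha> \<psi>s (setof m) =
    scale (if Suc (last (filter (\<lambda>i. m ! i) [0..<length m])) < length m
           then inner G (Lt (c ! last (filter (\<lambda>i. m ! i) [0..<length m]))) \<alpha> else 1)
     (tens G (map (\<lambda>j. if Suc (filter (\<lambda>i. m ! i) [0..<length m] ! j) < length m
                         \<and> m ! Suc (filter (\<lambda>i. m ! i) [0..<length m] ! j)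
                       then Lt (c ! (filter (\<lambda>i. m ! i) [0..<length m] ! j))
                       else (\<lambda>g. inner G (Lt (c ! (filter (\<lambda>i. m ! i) [0..<length m] ! j))) \<alpha> * \<iota> g))
       [0..<length (filter (\<lambda>i. m ! i) [0..<length m]) - 1]))"
proof -
  define fl where "fl = filter (\<lambda>i. m ! i) [0..<length m]"
  have sfl: "sorted_wrt (<) fl" unfolding fl_def by (rule sorted_fl)
  have flne: "fl \<noteq> []" using ne by (auto simp: fl_def filter_empty_conv)
  have flin: "\<And>j. j < length fl \<Longrightarrow> fl ! j < length m" 
    using nth_mem by (fastforce simp: fl_def)
  have lt: "\<And>a b. a < b \<Longrightarrow> b < length fl \<Longrightarrow> fl ! a < fl ! b"
    using sfl by (simp add: sorted_wrt_iff_nth_less)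
  have A: "setof m \<noteq> {}" using ne by (auto simp: setof_def)
  have psi: "\<psi>s ! x = Lt (c ! x)" if "x < length \<psi>s" for x
  proof -
    have "x < length c - 1" using l that by simp
    then show ?thesis unfolding ps by (simp add: nth_butlast)
  qed
  have xs: "map (\<lambda>i. if map Suc fl ! Suc i = Suc (map Suc fl ! i) then \<psi>s ! (map Suc fl ! i - 1)
               else (\<lambda>g. inner G (\<psi>s ! (map Suc fl ! i - 1)) \<alpha> * \<iota> g)) [0..<length fl - 1]
     = map (\<lambda>j. if Suc (fl ! j) < length m \<and> m ! Suc (fl ! j) then Lt (c ! (fl ! j))
                 else (\<lambda>g. inner G (Lt (c ! (fl ! j))) \<alpha> * \<iota> g)) [0..<length fl - 1]"
  proof (rule map_cong[OF refl])
    fix j assume "j \<in> set [0..<length fl - 1]"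
    then have j: "Suc j < length fl" by simp
    have c1: "(map Suc fl ! Suc j = Suc (map Suc fl ! j)) = (Suc (fl ! j) < length m \<and> m ! Suc (fl ! j))"
      using strict_next[OF sfl j] j by (auto simp: fl_def)
    have "fl ! j < fl ! Suc j" using lt j by simp
    then have "fl ! j < length \<psi>s" using flin[OF j] l by simp
    then show "(if map Suc fl ! Suc j = Suc (map Suc fl ! j) then \<psi>s ! (map Suc fl ! j - 1)
               else (\<lambda>g. inner G (\<psi>s ! (map Suc fl ! j - 1)) \<alpha> * \<iota> g))
        = (if Suc (fl ! j) < length m \<and> m ! Suc (fl ! j) then Lt (c ! (fl ! j))
                 else (\<lambda>g. inner G (Lt (c ! (fl ! j))) \<alpha> * \<iota> g))"
      using c1 j psi by simp
  qed
  have lam: "(if last (map Suc fl) < Suc (length \<psi>s) then inner G (\<psi>s ! (last (map Suc fl) - 1)) \<alpha> else 1)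
      = (if Suc (last fl) < length m then inner G (Lt (c ! last fl)) \<alpha> else 1)"
    using flne l psi by (simp add: last_map)
  have "piece G \<iota> \<alpha> \<psi>s (setof m) =
     (let as = map Suc fl; k = length as;
          xs = map (\<lambda>i. if as ! (Suc i) = Suc (as ! i) then \<psi>s ! (as ! i - 1)
                         else (\<lambda>g. inner G (\<psi>s ! (as ! i - 1)) \<alpha> * \<iota> g)) [0..<k - 1];
          lam = (if last as < Suc (length \<psi>s) then inner G (\<psi>s ! (last as - 1)) \<alpha> else 1)
      in scale lam (tens G xs))"
    unfolding piece_def sorted_setof fl_def[symmetric] using A by (rule if_not_P)
  also have "\<dots> = scale (if Suc (last fl) < length m then inner G (Lt (c ! last fl)) \<alpha> else 1)
     (tens G (map (\<lambda>j. if Suc (fl ! j) < length m \<and> m ! Suc (fl ! j) then Lt (c ! (fl ! j))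
                 else (\<lambda>g. inner G (Lt (c ! (fl ! j))) \<alpha> * \<iota> g)) [0..<length fl - 1]))"
    unfolding Let_def length_map xs lam ..
  finally show ?thesis unfolding fl_def .
qed


lemma tens_zero_entry:
  assumes "j < length xs" "xs ! j = (\<lambda>_. 0)" shows "tens G xs = (\<lambda>_. 0)"
proof
  fix zs show "tens G xs zs = 0"
    unfolding tens_def using assms by (auto intro!: prod_zero bexI[of _ j])
qed

lemma scale_zero_fun[simp]: "scale c (\<lambda>_. 0) = (\<lambda>_. 0)" by (simp add: scale_def)
lemma scale_0[simp]: "scale 0 f = (\<lambda>_. 0)" by (simp add: scale_def)
lemma scale_1[simp]: "scale 1 f = f" by (simp add: scale_def)

lemma piece_zero:
  assumes l: "length m = length c" "length c = Suc (length \<psi>s)" and ps: "\<psi>s = map Lt (butlast c)"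
    and ex: "Suc i < length m" "m ! i" "\<not> m ! Suc i" "inner G (Lt (c ! i)) \<alpha> = 0"
  shows "piece G \<iota> \<alpha> \<psi>s (setof m) = (\<lambda>_. 0)"
proof -
  define fl where "fl = filter (\<lambda>i. m ! i) [0..<length m]"
  have ne: "\<exists>i<length m. m ! i" using ex(1,2) by (intro exI[of _ i]) simp
  have "i \<in> set fl" using ex by (simp add: fl_def)
  then obtain j where j: "j < length fl" "fl ! j = i" by (auto simp: in_set_conv_nth)
  note P = piece_explicit[OF l ps ne, of G \<iota> \<alpha>, folded fl_def]
  show ?thesis
  proof (cases "Suc j < length fl")
    case True
    have "tens G (map (\<lambda>j. if Suc (fl ! j) < length m \<and> m ! Suc (fl ! j) then Lt (c ! (fl ! j))
                 else (\<lambda>g. inner G (Lt (c ! (fl ! j))) \<alpha> * \<iota> g)) [0..<length fl - 1]) = (\<lambda>_. 0)"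
      by (rule tens_zero_entry[of j]) (use True j ex in auto)
    then show ?thesis using P by simp
  next
    case False
    then have jj: "j = length fl - 1" using j by simp
    have "fl \<noteq> []" using j by auto
    then have "last fl = i" using j jj by (simp add: last_conv_nth)
    then show ?thesis using P ex by simp
  qed
qed

lemma piece_valid:
  assumes l: "length m = length c" "length c = Suc (length \<psi>s)" and ps: "\<psi>s = map Lt (butlast c)"
    and ne: "\<exists>i<length m. m ! i"
    and H: "\<forall>i. Suc i < length m \<longrightarrow> m ! i \<longrightarrow> \<not> m ! Suc i \<longrightarrow> inner G (Lt (c ! i)) \<alpha> = 1 \<and> \<iota> = Lt True"
  shows "piece G \<iota> \<alpha> \<psi>s (setof m) = tens G (map Lt (butlast (xl m c)))"
proof -
  define fl where "fl = filter (\<lambda>i. m ! i) [0..<length m]"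
  note P = piece_explicit[OF l ps ne, of G \<iota> \<alpha>, folded fl_def]
  have sfl: "sorted_wrt (<) fl" unfolding fl_def by (rule sorted_fl)
  have flne: "fl \<noteq> []" using ne by (auto simp: fl_def filter_empty_conv)
  have lt: "\<And>a b. a < b \<Longrightarrow> b < length fl \<Longrightarrow> fl ! a < fl ! b"
    using sfl by (simp add: sorted_wrt_iff_nth_less)
  have flin: "\<And>j. j < length fl \<Longrightarrow> fl ! j < length m \<and> m ! (fl ! j)"
  proof -
    fix j assume "j < length fl"
    then have "fl ! j \<in> set fl" by simp
    then show "fl ! j < length m \<and> m ! (fl ! j)" by (simp add: fl_def)
  qed
  have lam: "(if Suc (last fl) < length m then inner G (Lt (c ! last fl)) \<alpha> else 1) = 1"
  proof (cases "Suc (last fl) < length m")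
    case True
    have lin: "last fl \<in> set fl" using flne by simp
    then have "m ! last fl" by (simp add: fl_def)
    moreover have "\<not> m ! Suc (last fl)"
    proof
      assume "m ! Suc (last fl)"
      then have "Suc (last fl) \<in> set fl" using True by (simp add: fl_def)
      then have "Suc (last fl) \<le> last fl" unfolding fl_def by (rule filter_upt_last_le)
      then show False by simp
    qed
    ultimately show ?thesis using H True by simp
  qed simp
  have xs: "map (\<lambda>j. if Suc (fl ! j) < length m \<and> m ! Suc (fl ! j) then Lt (c ! (fl ! j))
                 else (\<lambda>g. inner G (Lt (c ! (fl ! j))) \<alpha> * \<iota> g)) [0..<length fl - 1]
      = map Lt (butlast (xl m c))"
  proof (rule nth_equalityI)
    show "length (map (\<lambda>j. if Suc (fl ! j) < length m \<and> m ! Suc (fl ! j) then Lt (c ! (fl ! j))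
                 else (\<lambda>g. inner G (Lt (c ! (fl ! j))) \<alpha> * \<iota> g)) [0..<length fl - 1])
      = length (map Lt (butlast (xl m c)))" by (simp add: xl_def fl_def)
    fix j assume "j < length (map (\<lambda>j. if Suc (fl ! j) < length m \<and> m ! Suc (fl ! j) then Lt (c ! (fl ! j))
                 else (\<lambda>g. inner G (Lt (c ! (fl ! j))) \<alpha> * \<iota> g)) [0..<length fl - 1])"
    then have j: "Suc j < length fl" by simp
    have r: "map Lt (butlast (xl m c)) ! j = Lt (\<not>(Suc (fl ! j) < length m \<and> m ! Suc (fl ! j)) \<or> c ! (fl ! j))"
      using j by (simp add: xl_def fl_def[symmetric] nth_butlast)
    show "map (\<lambda>j. if Suc (fl ! j) < length m \<and> m ! Suc (fl ! j) then Lt (c ! (fl ! j))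
                 else (\<lambda>g. inner G (Lt (c ! (fl ! j))) \<alpha> * \<iota> g)) [0..<length fl - 1] ! j
        = map Lt (butlast (xl m c)) ! j"
    proof (cases "Suc (fl ! j) < length m \<and> m ! Suc (fl ! j)")
      case True then show ?thesis using r j by simp
    next
      case False
      have "fl ! j < fl ! Suc j" using lt j by simp
      then have s: "Suc (fl ! j) < length m" using flin[OF j] by simp
      then have nm: "\<not> m ! Suc (fl ! j)" using False by simp
      have "m ! (fl ! j)" using flin j by simp
      then have I: "inner G (Lt (c ! (fl ! j))) \<alpha> = 1 \<and> \<iota> = Lt True" using H s nm by simp
      have "map (\<lambda>j. if Suc (fl ! j) < length m \<and> m ! Suc (fl ! j) then Lt (c ! (fl ! j))
                 else (\<lambda>g. inner G (Lt (c ! (fl ! j))) \<alpha> * \<iota> g)) [0..<length fl - 1] ! j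
          = (if Suc (fl ! j) < length m \<and> m ! Suc (fl ! j) then Lt (c ! (fl ! j))
                 else (\<lambda>g. inner G (Lt (c ! (fl ! j))) \<alpha> * \<iota> g))" using j by simp
      also have "\<dots> = (\<lambda>g. inner G (Lt (c ! (fl ! j))) \<alpha> * \<iota> g)" using False by (rule if_not_P)
      finally have e1: "map (\<lambda>j. if Suc (fl ! j) < length m \<and> m ! Suc (fl ! j) then Lt (c ! (fl ! j))
                 else (\<lambda>g. inner G (Lt (c ! (fl ! j))) \<alpha> * \<iota> g)) [0..<length fl - 1] ! j
          = (\<lambda>g. inner G (Lt (c ! (fl ! j))) \<alpha> * \<iota> g)" .
      have e2: "map Lt (butlast (xl m c)) ! j = Lt True" using r False by simp
      show ?thesis unfolding e1 e2 using I by auto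
    qed
  qed
  show ?thesis using P lam xs by simp
qed


definition WL :: "('a,'b) monoid_scheme \<Rightarrow> (bool \<Rightarrow> 'a \<Rightarrow> complex) \<Rightarrow> bool list \<Rightarrow> 'a list \<Rightarrow> complex" where
  "WL G Lt X = (if X = [] then chi_empty else tens G (map Lt (butlast X)))"

lemma WL_Nil[simp]: "WL G Lt [] = chi_empty" by (simp add: WL_def)

lemma WL_mult:
  assumes G: "group G" and io: "\<forall>g. g \<notin> carrier G \<longrightarrow> Lt True g = 0"
    and X: "X = [] \<or> last X" and Y: "Y = [] \<or> last Y"
  shows "hmult G (Lt True) (WL G Lt X) (WL G Lt Y) = WL G Lt (X @ Y)"
proof (cases "X = [] \<or> Y = []")
  case True then show ?thesis by auto
next
  case False
  then have "last X" "X \<noteq> []" "Y \<noteq> []" using X by auto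
  then have e: "butlast X @ [True] = X" using append_butlast_last_id[of X] by simp
  have "butlast (X @ Y) = X @ butlast Y" using \<open>Y \<noteq> []\<close> by (simp add: butlast_append)
  also have "\<dots> = (butlast X @ [True]) @ butlast Y" by (simp only: e)
  finally have bl: "butlast (X @ Y) = butlast X @ [True] @ butlast Y" by simp
  show ?thesis using False hmult_tens[OF G io] by (simp add: WL_def bl)
qed

lemma pow_masks_sum: "(\<Sum>A\<in>Pow {1..n}. F A) = (\<Sum>m\<in>Rl (replicate n False). F (setof m))"
proof -
  have inj: "inj_on setof (Rl (replicate n False))"
  proof (rule inj_onI)
    fix m1 m2 assume m: "m1 \<in> Rl (replicate n False)" "m2 \<in> Rl (replicate n False)" "setof m1 = setof m2"
    have l: "length m1 = n" "length m2 = n" using m(1,2) unfolding Rl_repl by auto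
    have "\<And>i. i < n \<Longrightarrow> m1 ! i = (Suc i \<in> setof m1)" "\<And>i. i < n \<Longrightarrow> m2 ! i = (Suc i \<in> setof m2)"
      using l by (auto simp: setof_def)
    then show "m1 = m2" using l m(3) by (intro nth_equalityI) auto
  qed
  have img: "setof ` Rl (replicate n False) = Pow {1..n}"
  proof (rule equalityI; rule subsetI)
    fix A assume "A \<in> setof ` Rl (replicate n False)"
    then show "A \<in> Pow {1..n}" unfolding Rl_repl by (auto simp: setof_def)
  next
    fix A assume A: "A \<in> Pow {1..n}"
    define m where "m = map (\<lambda>i. Suc i \<in> A) [0..<n]"
    have "setof m = A"
    proof (rule equalityI; rule subsetI)
      fix x assume "x \<in> setof m" then show "x \<in> A" by (auto simp: setof_def m_def)
    next
      fix x assume x: "x \<in> A"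
      then have "x \<in> {1..n}" using A by auto
      then obtain i where "x = Suc i" "i < n" by (cases x) auto
      then show "x \<in> setof m" using x by (auto simp: setof_def m_def)
    qed
    moreover have "m \<in> Rl (replicate n False)" unfolding Rl_repl by (simp add: m_def)
    ultimately show "A \<in> setof ` Rl (replicate n False)" by blast
  qed
  show ?thesis by (subst img[symmetric]) (simp add: sum.reindex[OF inj])
qed

lemma compl_setof: assumes "length m = n" shows "{1..n} - setof m = setof (map Not m)"
proof (intro equalityI subsetI)
  fix x assume "x \<in> {1..n} - setof m"
  then show "x \<in> setof (map Not m)" using assms by (cases x) (auto simp: setof_def)
next
  fix x assume "x \<in> setof (map Not m)"
  then show "x \<in> {1..n} - setof m" using assms by (auto simp: setof_def)
qed

lemma setof_empty: "\<not> (\<exists>i<length m. m ! i) \<Longrightarrow> setof m = {}"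
  by (auto simp: setof_def)

lemma xl_empty: "\<not> (\<exists>i<length m. m ! i) \<Longrightarrow> xl m c = []"
  by (auto simp: xl_def filter_empty_conv)

lemma xl_nonempty: "\<exists>i<length m. m ! i \<Longrightarrow> xl m c \<noteq> []"
  by (auto simp: xl_def filter_empty_conv)

lemma piece_WL:
  assumes l: "length m = length c" "length c = Suc (length \<psi>s)" and ps: "\<psi>s = map Lt (butlast c)"
    and H: "\<forall>i. Suc i < length m \<longrightarrow> m ! i \<longrightarrow> \<not> m ! Suc i \<longrightarrow> inner G (Lt (c ! i)) \<alpha> = 1 \<and> \<iota> = Lt True"
  shows "piece G \<iota> \<alpha> \<psi>s (setof m) = WL G Lt (xl m c)"
proof (cases "\<exists>i<length m. m ! i")
  case True
  have "piece G \<iota> \<alpha> \<psi>s (setof m) = tens G (map Lt (butlast (xl m c)))"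
    using l ps True H by (rule piece_valid)
  moreover have "xl m c \<noteq> []" using True by (rule xl_nonempty)
  ultimately show ?thesis unfolding WL_def by (simp only: if_False)
next
  case False
  then have "setof m = {}" "xl m c = []" by (rule setof_empty, rule xl_empty)
  then show ?thesis unfolding piece_def WL_def by simp
qed


lemma Rl_last: assumes "Y \<in> Rl L" "L \<noteq> []" "last L" shows "last Y"
proof -
  from assms(1) have l: "length Y = length L" and a: "list_all2 (\<lambda>l y. l \<longrightarrow> y) L Y"
    by (simp_all add: Rl_def)
  have "L ! (length L - 1)" using assms(2,3) by (simp add: last_conv_nth)
  moreover have "length L - 1 < length L" using assms(2) by simp
  ultimately have "Y ! (length L - 1)" using list_all2_nthD[OF a] by blast
  moreover have "Y \<noteq> []" using l assms(2) by auto
  ultimately show ?thesis using l by (simp add: last_conv_nth)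
qed

lemma Rl_end: assumes "Y \<in> Rl (rb X)" shows "Y = [] \<or> last Y"
proof (cases "X = []")
  case True then show ?thesis using assms by (simp add: rb_def Rl_def)
next
  case False then have "rb X \<noteq> []" "last (rb X)" by (simp_all add: rb_def)
  then show ?thesis using Rl_last[OF assms] by simp
qed

lemma rb_end: "rb X = [] \<or> last (rb X)" by (simp add: rb_def)

context
  fixes G :: "('a, 'b) monoid_scheme"
  assumes G: "group G" and fin: "finite (carrier G)" and c2: "card (carrier G) \<ge> 2"
begin

lemma one_in: "\<one>\<^bsub>G\<^esub> \<in> carrier G" using G by (simp add: group.is_monoid monoid.one_closed)

lemma Nne: "(of_nat (card (carrier G)) :: complex) \<noteq> 0" using c2 by simp
lemma Nne1: "(of_nat (card (carrier G)) :: complex) - 1 \<noteq> 0"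
proof
  assume "(of_nat (card (carrier G)) :: complex) - 1 = 0"
  then have "(of_nat (card (carrier G)) :: complex) = of_nat 1" by simp
  then have "card (carrier G) = 1" by (simp only: of_nat_eq_iff)
  then show False using c2 by simp
qed

lemma sum_reg: "(\<Sum>g\<in>carrier G. sc_reg G g * h g) = of_nat (card (carrier G)) * h \<one>\<^bsub>G\<^esub>"
proof -
  have "(\<Sum>g\<in>carrier G. sc_reg G g * h g) = (\<Sum>g\<in>carrier G. if g = \<one>\<^bsub>G\<^esub> then of_nat (card (carrier G)) * h g else 0)"
    by (rule sum.cong) (auto simp: sc_reg_def)
  also have "\<dots> = of_nat (card (carrier G)) * h \<one>\<^bsub>G\<^esub>" using fin one_in by (simp add: sum.delta)
  finally show ?thesis .
qed

lemma sum_one: "(\<Sum>g\<in>carrier G. sc_one G g * h g) = (\<Sum>g\<in>carrier G. h g)"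
  by (rule sum.cong) (auto simp: sc_one_def)

lemma cnj_one[simp]: "cnj (sc_one G g) = sc_one G g" by (simp add: sc_one_def)
lemma cnj_reg[simp]: "cnj (sc_reg G g) = sc_reg G g" by (simp add: sc_reg_def)
lemma cnj_dual[simp]: "cnj (sc_regm1_dual G g) = sc_regm1_dual G g"
  by (simp add: sc_regm1_dual_def sc_regm1_def)

lemma sum_one_const: "(\<Sum>g\<in>carrier G. sc_one G g) = of_nat (card (carrier G))"
  by (simp add: sc_one_def)

lemma sum_reg_const: "(\<Sum>g\<in>carrier G. sc_reg G g) = of_nat (card (carrier G))"
  using sum_reg[of "\<lambda>_. 1"] by simp

lemma inner_one_one: "inner G (sc_one G) (sc_one G) = 1"
  using Nne by (simp add: inner_def sum_one sum_one_const)

lemma inner_reg_one: "inner G (sc_reg G) (sc_one G) = 1"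
proof -
  have "(\<Sum>g\<in>carrier G. sc_reg G g * cnj (sc_one G g)) = of_nat (card (carrier G)) * sc_one G \<one>\<^bsub>G\<^esub>"
    using sum_reg[of "sc_one G"] by simp
  also have "sc_one G \<one>\<^bsub>G\<^esub> = 1" using one_in by (simp add: sc_one_def)
  finally show ?thesis using Nne by (simp add: inner_def)
qed

lemma inner_regm1_one: "inner G (sc_regm1 G) (sc_one G) = 0"
proof -
  have "(\<Sum>g\<in>carrier G. sc_regm1 G g * cnj (sc_one G g)) = (\<Sum>g\<in>carrier G. sc_reg G g) - (\<Sum>g\<in>carrier G. sc_one G g)"
  proof -
    have "(\<Sum>g\<in>carrier G. sc_regm1 G g * cnj (sc_one G g)) = (\<Sum>g\<in>carrier G. sc_reg G g - sc_one G g)"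
      by (rule sum.cong) (auto simp: sc_regm1_def sc_one_def)
    then show ?thesis by (simp add: sum_subtractf)
  qed
  then show ?thesis by (simp add: inner_def sum_reg_const sum_one_const)
qed

lemma inner_one_dual: "inner G (sc_one G) (sc_regm1_dual G) = 0"
proof -
  have "(\<Sum>g\<in>carrier G. sc_one G g * cnj (sc_regm1_dual G g))
      = ((\<Sum>g\<in>carrier G. sc_reg G g) - (\<Sum>g\<in>carrier G. sc_one G g)) / (of_nat (card (carrier G)) - 1)"
    by (simp add: sum_one sc_regm1_dual_def sc_regm1_def sum_divide_distrib[symmetric] sum_subtractf)
  then show ?thesis by (simp add: inner_def sum_reg_const sum_one_const)
qed

lemma inner_reg_dual: "inner G (sc_reg G) (sc_regm1_dual G) = 1"
proof -
  have "sc_regm1_dual G \<one>\<^bsub>G\<^esub> = 1"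
    using one_in Nne1 by (simp add: sc_regm1_dual_def sc_regm1_def sc_reg_def sc_one_def)
  then show ?thesis using Nne by (simp add: inner_def sum_reg)
qed

end

lemma one_scf: "sc_one G \<in> scf G"
proof -
  have "sc_one G = (\<lambda>g. (1::complex) * sc_one G g + 0 * sc_reg G g)" by simp
  then show ?thesis unfolding scf_def by blast
qed
lemma reg_scf: "sc_reg G \<in> scf G"
proof -
  have "sc_reg G = (\<lambda>g. (0::complex) * sc_one G g + 1 * sc_reg G g)" by simp
  then show ?thesis unfolding scf_def by blast
qed
lemma regm1_scf: "sc_regm1 G \<in> scf G"
proof -
  have "sc_regm1 G = (\<lambda>g. (-1::complex) * sc_one G g + 1 * sc_reg G g)" by (simp add: sc_regm1_def fun_eq_iff)
  then show ?thesis unfolding scf_def by blast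
qed

lemma reg_out: assumes "group G" shows "\<forall>g. g \<notin> carrier G \<longrightarrow> sc_reg G g = 0"
proof -
  have "\<one>\<^bsub>G\<^esub> \<in> carrier G" by (rule monoid.one_closed[OF group.is_monoid[OF assms]])
  then show ?thesis by (auto simp: sc_reg_def)
qed
lemma one_out: "\<forall>g. g \<notin> carrier G \<longrightarrow> sc_one G g = 0"
  by (simp add: sc_one_def)


lemma WL_Hspace:
  assumes "\<And>b. Lt b \<in> scf G" shows "WL G Lt X \<in> Hspace G"
proof (cases "X = []")
  case True then show ?thesis by (simp add: Hspace.unit)
next
  case False
  have "set (map Lt (butlast X)) \<subseteq> scf G" using assms by auto
  then show ?thesis using False by (simp add: WL_def Hspace.tens)
qed

lemma antipode_facts:
  assumes "is_antipode G \<iota> \<alpha> \<beta> S"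
  shows "\<And>x c. x \<in> Hspace G \<Longrightarrow> S (scale c x) = scale c (S x)"
    and "S chi_empty = chi_empty"
    and "S (\<lambda>_. 0) = (\<lambda>_. 0)"
    and "\<And>\<psi>s. set \<psi>s \<subseteq> scf G \<Longrightarrow> (\<Sum>A\<in>Pow {1..Suc (length \<psi>s)}.
            hmult G \<iota> (S (piece G \<iota> \<alpha> \<psi>s A)) (piece G \<iota> \<beta> \<psi>s ({1..Suc (length \<psi>s)} - A))) = (\<lambda>_. 0)"
proof -
  show sc: "\<And>x c. x \<in> Hspace G \<Longrightarrow> S (scale c x) = scale c (S x)"
    using assms by (simp add: is_antipode_def)
  show u: "S chi_empty = chi_empty" using assms by (simp add: is_antipode_def)
  have "S (scale 0 chi_empty) = scale 0 (S chi_empty)" by (rule sc) (rule Hspace.unit)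
  then show "S (\<lambda>_. 0) = (\<lambda>_. 0)" by simp
  show "\<And>\<psi>s. set \<psi>s \<subseteq> scf G \<Longrightarrow> (\<Sum>A\<in>Pow {1..Suc (length \<psi>s)}.
            hmult G \<iota> (S (piece G \<iota> \<alpha> \<psi>s A)) (piece G \<iota> \<beta> \<psi>s ({1..Suc (length \<psi>s)} - A))) = (\<lambda>_. 0)"
    using assms by (simp add: is_antipode_def)
qed

definition Lt1 :: "('a,'b) monoid_scheme \<Rightarrow> bool \<Rightarrow> 'a \<Rightarrow> complex" where
  "Lt1 G b = (if b then sc_one G else sc_regm1 G)"

definition T1 :: "('a,'b) monoid_scheme \<Rightarrow> bool list \<Rightarrow> 'a list \<Rightarrow> complex" where
  "T1 G X = scale ((-1) ^ ntrue X) (WL G (Lt1 G) (rb X))"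

lemma exit_of_not_exok: "\<not> exok m c \<Longrightarrow> \<exists>i. Suc i < length m \<and> m ! i \<and> \<not> m ! Suc i \<and> \<not> c ! i"
  by (auto simp: exok_def)

lemma case1:
  fixes G :: "('a, 'b) monoid_scheme"
  assumes G: "group G" and fin: "finite (carrier G)" and c2: "card (carrier G) \<ge> 2"
    and anti: "is_antipode G (sc_one G) (sc_one G) (sc_one G) S"
  shows "X \<noteq> [] \<Longrightarrow> last X \<Longrightarrow> S (WL G (Lt1 G) X) = T1 G X"
proof (induction "length X" arbitrary: X rule: less_induct)
  case (less c)
  note AF = antipode_facts[OF anti]
  define n where "n = length c"
  define \<psi>s where "\<psi>s = map (Lt1 G) (butlast c)"
  have lc: "length c = Suc (length \<psi>s)" using less.prems by (simp add: \<psi>s_def)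
  have Ltscf: "\<And>b. Lt1 G b \<in> scf G" by (simp add: Lt1_def one_scf regm1_scf)
  have pscf: "set \<psi>s \<subseteq> scf G" using Ltscf by (auto simp: \<psi>s_def)
  have Wc: "WL G (Lt1 G) c = tens G \<psi>s" using less.prems by (simp add: WL_def \<psi>s_def)
  have Lt1T: "Lt1 G True = sc_one G" by (simp add: Lt1_def)
  have i1: "inner G (Lt1 G True) (sc_one G) = 1" using inner_one_one[OF G fin c2] by (simp add: Lt1_def)
  have i0: "inner G (Lt1 G False) (sc_one G) = 0" using inner_regm1_one[OF G fin c2] by (simp add: Lt1_def)
  define M where "M = Rl (replicate n False)"
  define m0 where "m0 = replicate n True"
  have m0M: "m0 \<in> M" by (simp add: M_def m0_def Rl_repl)
  define H where "H m = hmult G (sc_one G) (S (piece G (sc_one G) (sc_one G) \<psi>s (setof m)))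
          (piece G (sc_one G) (sc_one G) \<psi>s (setof (map Not m)))" for m
  define E where "E m = (if exok m c \<and> exok (map Not m) c
      then scale ((-1) ^ ntrue (xl m c)) (WL G (Lt1 G) (rb (xl m c) @ xl (map Not m) c)) else (\<lambda>_. 0))" for m
  have lenM: "\<And>m. m \<in> M \<Longrightarrow> length m = length c" by (simp add: M_def Rl_repl n_def)
  have pv: "piece G (sc_one G) (sc_one G) \<psi>s (setof m') = WL G (Lt1 G) (xl m' c)"
    if l': "length m' = length c" and ok': "exok m' c" for m'
  proof (rule piece_WL[OF l' lc \<psi>s_def])
    show "\<forall>i. Suc i < length m' \<longrightarrow> m' ! i \<longrightarrow> \<not> m' ! Suc i \<longrightarrow>
        inner G (Lt1 G (c ! i)) (sc_one G) = 1 \<and> sc_one G = Lt1 G True"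
      using ok' i1 by (auto simp: exok_def Lt1_def)
  qed
  have pz: "piece G (sc_one G) (sc_one G) \<psi>s (setof m') = (\<lambda>_. 0)"
    if l': "length m' = length c" and nok: "\<not> exok m' c" for m'
  proof -
    obtain i where i: "Suc i < length m'" "m' ! i" "\<not> m' ! Suc i" "\<not> c ! i"
      using exit_of_not_exok[OF nok] by blast
    have inn: "inner G (Lt1 G (c ! i)) (sc_one G) = 0" using i(4) i0 by simp
    show ?thesis using l' lc \<psi>s_def i(1-3) inn by (rule piece_zero)
  qed
  have Sxl: "S (WL G (Lt1 G) (xl m c)) = T1 G (xl m c)" if "length m = length c" "m \<noteq> m0" for m
  proof (cases "xl m c = []")
    case True then show ?thesis using AF(2) by (simp add: T1_def rb_def)
  next
    case False
    have "length (xl m c) < length c" using length_xl_less[of m n c] that by (simp add: n_def m0_def)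
    moreover have "last (xl m c)" using xl_last[OF that(1) less.prems False] .
    ultimately show ?thesis using less.hyps False by blast
  qed
  have HE: "H m = E m" if "m \<in> M" "m \<noteq> m0" for m
  proof -
    have l: "length m = length c" using lenM that(1) by simp
    have ln: "length (map Not m) = length c" using l by simp
    show ?thesis
    proof (cases "exok m c")
      case False
      then show ?thesis using pz[OF l False] AF(3) by (simp add: H_def E_def)
    next
      case ok1: True
      show ?thesis
      proof (cases "exok (map Not m) c")
        case False
        then show ?thesis using pz[OF ln False] by (simp add: H_def E_def)
      next
        case ok2: True
        have "H m = hmult G (sc_one G) (T1 G (xl m c)) (WL G (Lt1 G) (xl (map Not m) c))"
          unfolding H_def pv[OF l ok1] pv[OF ln ok2] Sxl[OF l that(2)] ..
        also have "\<dots> = scale ((-1) ^ ntrue (xl m c))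
            (hmult G (Lt1 G True) (WL G (Lt1 G) (rb (xl m c))) (WL G (Lt1 G) (xl (map Not m) c)))"
          by (simp add: T1_def hmult_scale_left Lt1T)
        also have "\<dots> = scale ((-1) ^ ntrue (xl m c)) (WL G (Lt1 G) (rb (xl m c) @ xl (map Not m) c))"
        proof -
          have ce: "c = [] \<or> last c" using less.prems by simp
          have o: "\<forall>g. g \<notin> carrier G \<longrightarrow> Lt1 G True g = 0" by (simp add: Lt1T one_out)
          show ?thesis using WL_mult[where Lt="Lt1 G", OF G o rb_end[of "xl m c"] xl_end'[OF ln ce]] by simp
        qed
        finally show ?thesis using ok1 ok2 by (simp add: E_def)
      qed
    qed
  qed
  have Hm0: "H m0 = S (WL G (Lt1 G) c)"
  proof -
    have l0: "length m0 = length c" by (simp add: m0_def n_def)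
    have x0: "xl m0 c = c" using less.prems by (simp add: m0_def n_def xl_all_True)
    have "piece G (sc_one G) (sc_one G) \<psi>s (setof m0) = WL G (Lt1 G) c"
      using pv[OF l0] x0 by (simp add: m0_def exok_repl)
    moreover have "setof (map Not m0) = {}" by (simp add: m0_def setof_def)
    ultimately show ?thesis by (simp add: H_def piece_def)
  qed
  have Em0: "E m0 = T1 G c"
  proof -
    have x0: "xl m0 c = c" using less.prems by (simp add: m0_def n_def xl_all_True)
    have x1: "xl (map Not m0) c = []" by (simp add: m0_def xl_all_False)
    have e: "exok m0 c \<and> exok (map Not m0) c" by (simp add: m0_def exok_repl)
    show ?thesis unfolding E_def using e by (simp add: x0 x1 T1_def)
  qed
  have sumH: "(\<Sum>m\<in>M. H m) = (\<lambda>_. 0)"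
  proof -
    have "(\<Sum>m\<in>M. H m) = (\<Sum>m\<in>Rl (replicate (Suc (length \<psi>s)) False).
       hmult G (sc_one G) (S (piece G (sc_one G) (sc_one G) \<psi>s (setof m)))
          (piece G (sc_one G) (sc_one G) \<psi>s ({1..Suc (length \<psi>s)} - setof m)))"
      unfolding M_def H_def n_def lc
    proof (rule sum.cong[OF refl])
      fix m assume "m \<in> Rl (replicate (Suc (length \<psi>s)) False)"
      then have lm: "length m = Suc (length \<psi>s)" unfolding Rl_repl by simp
      show "hmult G (sc_one G) (S (piece G (sc_one G) (sc_one G) \<psi>s (setof m)))
          (piece G (sc_one G) (sc_one G) \<psi>s (setof (map Not m))) =
        hmult G (sc_one G) (S (piece G (sc_one G) (sc_one G) \<psi>s (setof m)))
          (piece G (sc_one G) (sc_one G) \<psi>s ({1..Suc (length \<psi>s)} - setof m))"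
        by (simp only: compl_setof[OF lm])
    qed
    also have "\<dots> = (\<Sum>A\<in>Pow {1..Suc (length \<psi>s)}.
       hmult G (sc_one G) (S (piece G (sc_one G) (sc_one G) \<psi>s A))
          (piece G (sc_one G) (sc_one G) \<psi>s ({1..Suc (length \<psi>s)} - A)))"
      by (rule pow_masks_sum[symmetric])
    also have "\<dots> = (\<lambda>_. 0)" by (rule AF(4)[OF pscf])
    finally show ?thesis .
  qed
  have sumE: "(\<Sum>m\<in>M. E m zs) = 0" for zs
  proof -
    have "(\<Sum>m\<in>M. E m zs) = (\<Sum>m\<in>Rl (replicate (length c) False).
            if exok m c \<and> exok (map Not m) c
            then (-1) ^ ntrue (xl m c) * (\<lambda>L. WL G (Lt1 G) L zs) (rb (xl m c) @ xl (map Not m) c)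
            else 0)"
      unfolding M_def n_def E_def by (rule sum.cong[OF refl]) (simp add: scale_def)
    also have "\<dots> = 0" by (rule ID1[OF less.prems])
    finally show ?thesis .
  qed
  show ?case
  proof
    fix zs
    have fM: "finite M" by (simp add: M_def)
    have "0 = (\<Sum>m\<in>M. H m) zs" using sumH by simp
    also have "\<dots> = H m0 zs + (\<Sum>m\<in>M - {m0}. H m zs)"
      using fM m0M by (simp add: sum_fun_apply sum.remove)
    also have "(\<Sum>m\<in>M - {m0}. H m zs) = (\<Sum>m\<in>M - {m0}. E m zs)"
      using HE by (intro sum.cong) auto
    finally have 1: "0 = H m0 zs + (\<Sum>m\<in>M - {m0}. E m zs)" .
    have "0 = E m0 zs + (\<Sum>m\<in>M - {m0}. E m zs)"
      using sumE[of zs] fM m0M by (simp add: sum.remove)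
    then have "S (WL G (Lt1 G) c) zs + (\<Sum>m\<in>M - {m0}. E m zs) = T1 G c zs + (\<Sum>m\<in>M - {m0}. E m zs)"
      using 1 Hm0 Em0 by simp
    then show "S (WL G (Lt1 G) c) zs = T1 G c zs" by simp
  qed
qed


definition Lt2 :: "('a,'b) monoid_scheme \<Rightarrow> bool \<Rightarrow> 'a \<Rightarrow> complex" where
  "Lt2 G b = (if b then sc_reg G else sc_one G)"

definition T2 :: "('a,'b) monoid_scheme \<Rightarrow> bool list \<Rightarrow> 'a list \<Rightarrow> complex" where
  "T2 G X = (\<lambda>zs. \<Sum>Y\<in>Rl (rb X). (-1) ^ ntrue Y * WL G (Lt2 G) Y zs)"

lemma case2:
  fixes G :: "('a, 'b) monoid_scheme"
  assumes G: "group G" and fin: "finite (carrier G)" and c2: "card (carrier G) \<ge> 2"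
    and anti: "is_antipode G (sc_reg G) (sc_one G) (sc_regm1_dual G) S"
  shows "X \<noteq> [] \<Longrightarrow> last X \<Longrightarrow> S (WL G (Lt2 G) X) = T2 G X"
proof (induction "length X" arbitrary: X rule: less_induct)
  case (less c)
  note AF = antipode_facts[OF anti]
  define n where "n = length c"
  define \<psi>s where "\<psi>s = map (Lt2 G) (butlast c)"
  have lc: "length c = Suc (length \<psi>s)" using less.prems by (simp add: \<psi>s_def)
  have Ltscf: "\<And>b. Lt2 G b \<in> scf G" by (simp add: Lt2_def one_scf reg_scf)
  have pscf: "set \<psi>s \<subseteq> scf G" using Ltscf by (auto simp: \<psi>s_def)
  have Lt2T: "Lt2 G True = sc_reg G" by (simp add: Lt2_def)
  have ia: "\<And>b. inner G (Lt2 G b) (sc_one G) = 1"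
    using inner_one_one[OF G fin c2] inner_reg_one[OF G fin c2] by (simp add: Lt2_def)
  have ib1: "inner G (Lt2 G True) (sc_regm1_dual G) = 1" using inner_reg_dual[OF G fin c2] by (simp add: Lt2_def)
  have ib0: "inner G (Lt2 G False) (sc_regm1_dual G) = 0" using inner_one_dual[OF G fin c2] by (simp add: Lt2_def)
  define M where "M = Rl (replicate n False)"
  define m0 where "m0 = replicate n True"
  have m0M: "m0 \<in> M" by (simp add: M_def m0_def Rl_repl)
  define H where "H m = hmult G (sc_reg G) (S (piece G (sc_reg G) (sc_one G) \<psi>s (setof m)))
          (piece G (sc_reg G) (sc_regm1_dual G) \<psi>s (setof (map Not m)))" for m
  define E where "E m = (if exok (map Not m) c
      then (\<lambda>zs. \<Sum>Y\<in>Rl (rb (xl m c)). (-1) ^ ntrue Y * WL G (Lt2 G) (Y @ xl (map Not m) c) zs)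
      else (\<lambda>_. 0))" for m
  have lenM: "\<And>m. m \<in> M \<Longrightarrow> length m = length c" by (simp add: M_def Rl_repl n_def)
  have pvA: "piece G (sc_reg G) (sc_one G) \<psi>s (setof m') = WL G (Lt2 G) (xl m' c)"
    if l': "length m' = length c" for m'
  proof (rule piece_WL[OF l' lc \<psi>s_def])
    show "\<forall>i. Suc i < length m' \<longrightarrow> m' ! i \<longrightarrow> \<not> m' ! Suc i \<longrightarrow>
        inner G (Lt2 G (c ! i)) (sc_one G) = 1 \<and> sc_reg G = Lt2 G True"
      using ia by (simp add: Lt2T)
  qed
  have pvB: "piece G (sc_reg G) (sc_regm1_dual G) \<psi>s (setof m') = WL G (Lt2 G) (xl m' c)"
    if l': "length m' = length c" and ok': "exok m' c" for m'
  proof (rule piece_WL[OF l' lc \<psi>s_def])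
    show "\<forall>i. Suc i < length m' \<longrightarrow> m' ! i \<longrightarrow> \<not> m' ! Suc i \<longrightarrow>
        inner G (Lt2 G (c ! i)) (sc_regm1_dual G) = 1 \<and> sc_reg G = Lt2 G True"
      using ok' ib1 by (auto simp: exok_def Lt2T)
  qed
  have pzB: "piece G (sc_reg G) (sc_regm1_dual G) \<psi>s (setof m') = (\<lambda>_. 0)"
    if l': "length m' = length c" and nok: "\<not> exok m' c" for m'
  proof -
    obtain i where i: "Suc i < length m'" "m' ! i" "\<not> m' ! Suc i" "\<not> c ! i"
      using exit_of_not_exok[OF nok] by blast
    have inn: "inner G (Lt2 G (c ! i)) (sc_regm1_dual G) = 0" using i(4) ib0 by simp
    show ?thesis using l' lc \<psi>s_def i(1-3) inn by (rule piece_zero)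
  qed
  have Sxl: "S (WL G (Lt2 G) (xl m c)) = T2 G (xl m c)" if "length m = length c" "m \<noteq> m0" for m
  proof (cases "xl m c = []")
    case True then show ?thesis using AF(2) by (simp add: T2_def rb_def)
  next
    case False
    have "length (xl m c) < length c" using length_xl_less[of m n c] that by (simp add: n_def m0_def)
    moreover have "last (xl m c)" using xl_last[OF that(1) less.prems False] .
    ultimately show ?thesis using less.hyps False by blast
  qed
  have o: "\<forall>g. g \<notin> carrier G \<longrightarrow> Lt2 G True g = 0" by (simp add: Lt2T reg_out[OF G])
  have ce: "c = [] \<or> last c" using less.prems by simp
  have HE: "H m = E m" if "m \<in> M" "m \<noteq> m0" for m
  proof -
    have l: "length m = length c" using lenM that(1) by simp
    have ln: "length (map Not m) = length c" using l by simp
    show ?thesis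
    proof (cases "exok (map Not m) c")
      case False
      then show ?thesis using pzB[OF ln False] by (simp add: H_def E_def)
    next
      case ok2: True
      have "H m = hmult G (sc_reg G) (T2 G (xl m c)) (WL G (Lt2 G) (xl (map Not m) c))"
        unfolding H_def pvA[OF l] pvB[OF ln ok2] Sxl[OF l that(2)] ..
      also have "\<dots> = E m"
      proof
        fix zs
        have "hmult G (sc_reg G) (T2 G (xl m c)) (WL G (Lt2 G) (xl (map Not m) c)) zs
          = (\<Sum>Y\<in>Rl (rb (xl m c)). (-1) ^ ntrue Y * hmult G (Lt2 G True) (WL G (Lt2 G) Y) (WL G (Lt2 G) (xl (map Not m) c)) zs)"
          unfolding T2_def Lt2T by (rule hmult_sum_left)
        also have "\<dots> = (\<Sum>Y\<in>Rl (rb (xl m c)). (-1) ^ ntrue Y * WL G (Lt2 G) (Y @ xl (map Not m) c) zs)"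
        proof (rule sum.cong[OF refl])
          fix Y assume "Y \<in> Rl (rb (xl m c))"
          then have "Y = [] \<or> last Y" by (rule Rl_end)
          then show "(-1) ^ ntrue Y * hmult G (Lt2 G True) (WL G (Lt2 G) Y) (WL G (Lt2 G) (xl (map Not m) c)) zs
              = (-1) ^ ntrue Y * WL G (Lt2 G) (Y @ xl (map Not m) c) zs"
            using WL_mult[where Lt="Lt2 G", OF G o _ xl_end'[OF ln ce]] by simp
        qed
        finally show "hmult G (sc_reg G) (T2 G (xl m c)) (WL G (Lt2 G) (xl (map Not m) c)) zs = E m zs"
          using ok2 by (simp add: E_def)
      qed
      finally show ?thesis .
    qed
  qed
  have Hm0: "H m0 = S (WL G (Lt2 G) c)"
  proof -
    have l0: "length m0 = length c" by (simp add: m0_def n_def)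
    have x0: "xl m0 c = c" using less.prems by (simp add: m0_def n_def xl_all_True)
    have "piece G (sc_reg G) (sc_one G) \<psi>s (setof m0) = WL G (Lt2 G) c"
      using pvA[OF l0] x0 by simp
    moreover have "setof (map Not m0) = {}" by (simp add: m0_def setof_def)
    ultimately show ?thesis by (simp add: H_def piece_def)
  qed
  have Em0: "E m0 = T2 G c"
  proof -
    have x0: "xl m0 c = c" using less.prems by (simp add: m0_def n_def xl_all_True)
    have x1: "xl (map Not m0) c = []" by (simp add: m0_def xl_all_False)
    have e: "exok (map Not m0) c" by (simp add: m0_def exok_repl)
    show ?thesis unfolding E_def using e by (simp add: x0 x1 T2_def)
  qed
  have sumH: "(\<Sum>m\<in>M. H m) = (\<lambda>_. 0)"
  proof -
    have "(\<Sum>m\<in>M. H m) = (\<Sum>m\<in>Rl (replicate (Suc (length \<psi>s)) False).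
       hmult G (sc_reg G) (S (piece G (sc_reg G) (sc_one G) \<psi>s (setof m)))
          (piece G (sc_reg G) (sc_regm1_dual G) \<psi>s ({1..Suc (length \<psi>s)} - setof m)))"
      unfolding M_def H_def n_def lc
    proof (rule sum.cong[OF refl])
      fix m assume "m \<in> Rl (replicate (Suc (length \<psi>s)) False)"
      then have lm: "length m = Suc (length \<psi>s)" unfolding Rl_repl by simp
      show "hmult G (sc_reg G) (S (piece G (sc_reg G) (sc_one G) \<psi>s (setof m)))
          (piece G (sc_reg G) (sc_regm1_dual G) \<psi>s (setof (map Not m))) =
        hmult G (sc_reg G) (S (piece G (sc_reg G) (sc_one G) \<psi>s (setof m)))
          (piece G (sc_reg G) (sc_regm1_dual G) \<psi>s ({1..Suc (length \<psi>s)} - setof m))"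
        by (simp only: compl_setof[OF lm])
    qed
    also have "\<dots> = (\<Sum>A\<in>Pow {1..Suc (length \<psi>s)}.
       hmult G (sc_reg G) (S (piece G (sc_reg G) (sc_one G) \<psi>s A))
          (piece G (sc_reg G) (sc_regm1_dual G) \<psi>s ({1..Suc (length \<psi>s)} - A)))"
      by (rule pow_masks_sum[symmetric])
    also have "\<dots> = (\<lambda>_. 0)" by (rule AF(4)[OF pscf])
    finally show ?thesis .
  qed
  have sumE: "(\<Sum>m\<in>M. E m zs) = 0" for zs
  proof -
    have "(\<Sum>m\<in>M. E m zs) = (\<Sum>m\<in>Rl (replicate (length c) False).
            if exok (map Not m) c
            then (\<Sum>Y\<in>Rl (rb (xl m c)). (-1) ^ ntrue Y * (\<lambda>L. WL G (Lt2 G) L zs) (Y @ xl (map Not m) c))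
            else 0)"
      unfolding M_def n_def E_def by (rule sum.cong[OF refl]) simp
    also have "\<dots> = 0" by (rule ID2[OF less.prems])
    finally show ?thesis .
  qed
  show ?case
  proof
    fix zs
    have fM: "finite M" by (simp add: M_def)
    have "0 = (\<Sum>m\<in>M. H m) zs" using sumH by simp
    also have "\<dots> = H m0 zs + (\<Sum>m\<in>M - {m0}. H m zs)"
      using fM m0M by (simp add: sum_fun_apply sum.remove)
    also have "(\<Sum>m\<in>M - {m0}. H m zs) = (\<Sum>m\<in>M - {m0}. E m zs)"
      using HE by (intro sum.cong) auto
    finally have 1: "0 = H m0 zs + (\<Sum>m\<in>M - {m0}. E m zs)" .
    have "0 = E m0 zs + (\<Sum>m\<in>M - {m0}. E m zs)"
      using sumE[of zs] fM m0M by (simp add: sum.remove)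
    then have "S (WL G (Lt2 G) c) zs + (\<Sum>m\<in>M - {m0}. E m zs) = T2 G c zs + (\<Sum>m\<in>M - {m0}. E m zs)"
      using 1 Hm0 Em0 by simp
    then show "S (WL G (Lt2 G) c) zs = T2 G c zs" by simp
  qed
qed


definition pos :: "nat list \<Rightarrow> bool" where "pos \<mu> \<longleftrightarrow> (\<forall>m\<in>set \<mu>. 0 < m)"

definition cl :: "nat list \<Rightarrow> bool list" where "cl \<mu> = concat (map (\<lambda>m. blk (m - 1)) \<mu>)"

lemma cl_simps[simp]: "cl [] = []" "cl (m # \<mu>) = blk (m - 1) @ cl \<mu>" "cl (\<mu> @ \<nu>) = cl \<mu> @ cl \<nu>"
  by (simp_all add: cl_def)

lemma pos_simps[simp]: "pos []" "pos (m # \<mu>) \<longleftrightarrow> 0 < m \<and> pos \<mu>" "pos (\<mu> @ \<nu>) \<longleftrightarrow> pos \<mu> \<and> pos \<nu>"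
  "pos (rev \<mu>) = pos \<mu>"
  by (auto simp: pos_def)

lemma ntrue_cl: "ntrue (cl \<mu>) = length \<mu>"
  by (induction \<mu>) auto

lemma length_cl: "pos \<mu> \<Longrightarrow> length (cl \<mu>) = sum_list \<mu>"
  by (induction \<mu>) auto

lemma cl_end: "cl \<mu> = [] \<or> last (cl \<mu>)"
  by (induction \<mu>) (auto simp: blk_def)

lemma cl_ne: "\<mu> \<noteq> [] \<Longrightarrow> cl \<mu> \<noteq> []"
  by (cases \<mu>) auto

lemma rb_cl: "rb (cl \<mu>) = cl (rev \<mu>)"
proof (induction \<mu>)
  case Nil then show ?case by (simp add: rb_def)
next
  case (Cons m \<mu>)
  then show ?case using rb_blk[OF cl_end[of \<mu>], of "m - 1"] by simp
qed

lemma map_add_upt': "map (\<lambda>i. i + m) [a..<b] = [a + m..<b + m]"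
  by (induction b) auto

lemma descents_Cons:
  assumes "\<mu> \<noteq> []"
  shows "descents (m # \<mu>) = insert m ((+) m ` descents \<mu>)"
proof (intro equalityI subsetI)
  fix x assume "x \<in> descents (m # \<mu>)"
  then obtain i where i: "1 \<le> i" "i < length (m # \<mu>)" "x = sum_list (take i (m # \<mu>))"
    by (auto simp: descents_def)
  then obtain i' where ii: "i = Suc i'" by (cases i) auto
  show "x \<in> insert m ((+) m ` descents \<mu>)"
  proof (cases "i' = 0")
    case True then show ?thesis using i ii by simp
  next
    case False
    then have "x = m + sum_list (take i' \<mu>)" "1 \<le> i'" "i' < length \<mu>" using i ii by auto
    then show ?thesis by (auto simp: descents_def)
  qed
next
  fix x assume x: "x \<in> insert m ((+) m ` descents \<mu>)"
  show "x \<in> descents (m # \<mu>)"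
  proof (cases "x = m")
    case True
    then show ?thesis using assms unfolding descents_def
      by (intro CollectI exI[of _ 1]) (auto simp: neq_Nil_conv)
  next
    case False
    then obtain i where "1 \<le> i" "i < length \<mu>" "x = m + sum_list (take i \<mu>)"
      using x by (auto simp: descents_def)
    then show ?thesis unfolding descents_def
      by (intro CollectI exI[of _ "Suc i"]) auto
  qed
qed

lemma descents_single: "descents [m] = {}"
  by (simp add: descents_def)

lemma desc_list:
  "pos \<mu> \<Longrightarrow> \<mu> \<noteq> [] \<Longrightarrow> map (\<lambda>j. j \<in> descents \<mu>) [1..<sum_list \<mu>] @ [True] = cl \<mu>"
proof (induction \<mu>)
  case Nil then show ?case by simp
next
  case (Cons m \<mu>)
  have m: "0 < m" using Cons.prems by simp
  have rep: "map (\<lambda>j. P j) [1..<m] = replicate (m - 1) False" if "\<And>j. j < m \<Longrightarrow> \<not> P j" for P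
  proof -
    have "map (\<lambda>j. P j) [1..<m] = map (\<lambda>j. False) [1..<m]" using that by (intro map_cong) auto
    then show ?thesis by (simp add: map_replicate_const)
  qed
  show ?case
  proof (cases "\<mu> = []")
    case True
    then show ?thesis using rep[of "\<lambda>j. j \<in> descents [m]"] by (simp add: descents_single blk_def)
  next
    case False
    define s where "s = sum_list \<mu>"
    define D where "D = descents \<mu>"
    have s: "s \<ge> 1" using False Cons.prems unfolding s_def
      by (cases \<mu>) auto
    have up: "[1..<m + s] = [1..<m] @ [m] @ map (\<lambda>i. i + m) [1..<s]"
    proof -
      have "[1..<m + s] = [1..<m] @ [m..<m + s]" using m by (metis Suc_leI add_le_cancel_left le_add1 le_add_diff_inverse upt_add_eq_append One_nat_def)
      moreover have "[m..<m + s] = m # [Suc m..<m + s]" using s by (simp add: upt_rec)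
      moreover have "[Suc m..<m + s] = map (\<lambda>i. i + m) [1..<s]" by (simp add: map_add_upt' add.commute)
      ultimately show ?thesis by simp
    qed
    have dc: "descents (m # \<mu>) = insert m ((+) m ` D)" using descents_Cons[OF False] by (simp add: D_def)
    have p1: "map (\<lambda>j. j \<in> descents (m # \<mu>)) [1..<m] = replicate (m - 1) False"
      by (rule rep) (auto simp: dc)
    have p2: "map (\<lambda>j. j \<in> descents (m # \<mu>)) (map (\<lambda>i. i + m) [1..<s]) = map (\<lambda>j. j \<in> D) [1..<s]"
      by (auto simp: dc)
    have IH: "map (\<lambda>j. j \<in> D) [1..<s] @ [True] = cl \<mu>"
      using Cons.IH Cons.prems False by (simp add: D_def s_def)
    have L: "map (\<lambda>j. j \<in> descents (m # \<mu>)) [1..<m + s] = replicate (m - 1) False @ [True] @ map (\<lambda>j. j \<in> D) [1..<s]"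
      unfolding up map_append p1 p2 by (simp add: dc)
    have e: "sum_list (m # \<mu>) = m + s" by (simp add: s_def)
    show ?thesis unfolding e L cl_simps IH[symmetric] by (simp add: blk_def)
  qed
qed

lemma is_comp_pos: "is_composition n \<mu> \<Longrightarrow> pos \<mu>"
  by (simp add: is_composition_def pos_def)

lemma chi_bn0_WL:
  assumes "is_composition n \<mu>" "n \<ge> 1"
  shows "chi_bn0 G n \<mu> = WL G (Lt1 G) (cl \<mu>)"
proof -
  have p: "pos \<mu>" and s: "sum_list \<mu> = n" using assms by (auto simp: is_composition_def pos_def)
  have ne: "\<mu> \<noteq> []" using s assms(2) by auto
  have "butlast (cl \<mu>) = map (\<lambda>j. j \<in> descents \<mu>) [1..<n]"
    using desc_list[OF p ne] s by (metis butlast_snoc)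
  then show ?thesis using cl_ne[OF ne]
    by (simp add: chi_bn0_def WL_def Lt1_def comp_def)
qed

lemma ind_bn1_WL:
  assumes "is_composition n \<mu>" "n \<ge> 1"
  shows "ind_bn1 G n \<mu> = WL G (Lt2 G) (cl \<mu>)"
proof -
  have p: "pos \<mu>" and s: "sum_list \<mu> = n" using assms by (auto simp: is_composition_def pos_def)
  have ne: "\<mu> \<noteq> []" using s assms(2) by auto
  have "butlast (cl \<mu>) = map (\<lambda>j. j \<in> descents \<mu>) [1..<n]"
    using desc_list[OF p ne] s by (metis butlast_snoc)
  then show ?thesis using cl_ne[OF ne]
    by (simp add: ind_bn1_def WL_def Lt2_def comp_def)
qed

lemma hprod_cl:
  assumes G: "group G" and p: "pos \<nu>"
  shows "hprod G (sc_one G) (map (\<lambda>m. chi_bn0 G m [m]) \<nu>) = WL G (Lt1 G) (cl \<nu>)"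
  using p
proof (induction \<nu>)
  case Nil then show ?case by (simp add: hprod_def)
next
  case (Cons m \<nu>)
  have m: "0 < m" using Cons.prems by simp
  have c: "chi_bn0 G m [m] = WL G (Lt1 G) (cl [m])"
    by (rule chi_bn0_WL) (use m in \<open>auto simp: is_composition_def\<close>)
  have o: "\<forall>g. g \<notin> carrier G \<longrightarrow> Lt1 G True g = 0" by (simp add: Lt1_def one_out)
  have lt: "Lt1 G True = sc_one G" by (simp add: Lt1_def)
  have "hprod G (sc_one G) (map (\<lambda>m. chi_bn0 G m [m]) (m # \<nu>))
      = hmult G (Lt1 G True) (WL G (Lt1 G) (cl [m])) (WL G (Lt1 G) (cl \<nu>))"
    using Cons c by (simp add: hprod_def lt)
  also have "\<dots> = WL G (Lt1 G) (cl [m] @ cl \<nu>)"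
    by (rule WL_mult[where Lt="Lt1 G", OF G o cl_end cl_end])
  finally show ?case by simp
qed


lemma decomp_cl: "Z = [] \<or> last Z \<Longrightarrow> \<exists>\<nu>. pos \<nu> \<and> Z = cl \<nu>"
proof (induction "length Z" arbitrary: Z rule: less_induct)
  case (less Z)
  show ?case
  proof (cases "Z = []")
    case True then show ?thesis by (intro exI[of _ "[]"]) simp
  next
    case False
    then have "last Z" using less.prems by simp
    then obtain k Z2 where Z: "Z = blk k @ Z2" and Z2: "Z2 = [] \<or> last Z2"
      using first_block[OF False] by blast
    have "length Z2 < length Z" using Z by simp
    then obtain \<nu> where "pos \<nu>" "Z2 = cl \<nu>" using less.hyps Z2 by blast
    then show ?thesis using Z by (intro exI[of _ "Suc k # \<nu>"]) simp
  qed
qed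

lemma Rl_blk_mem: "Y \<in> Rl (blk k) \<longleftrightarrow> length Y = Suc k \<and> last Y"
proof
  assume "Y \<in> Rl (blk k)"
  then show "length Y = Suc k \<and> last Y" using Rl_last[of Y "blk k"] by (simp add: Rl_def)
next
  assume a: "length Y = Suc k \<and> last Y"
  have "list_all2 (\<lambda>l y. l \<longrightarrow> y) (blk k) Y"
  proof (rule list_all2_all_nthI)
    show "length (blk k) = length Y" using a by simp
    fix i assume "i < length (blk k)"
    then have i: "i \<le> k" by simp
    show "blk k ! i \<longrightarrow> Y ! i"
    proof
      assume "blk k ! i"
      then have "i = k" using blk_nth[OF i] by simp
      then show "Y ! i" using a by (metis diff_Suc_1 last_conv_nth list.size(3) nat.distinct(1))
    qed
  qed
  then show "Y \<in> Rl (blk k)" using a by (simp add: Rl_def)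
qed

lemma tw_blk: "takeWhile Not (blk i @ X) = replicate i False"
  by (induction i) (auto simp: blk_def)

lemma dr_blk: "drop (Suc i) (blk i @ X) = X"
  by (induction i) (auto simp: blk_def)

lemma blk_app_inj: assumes "blk i @ X = blk j @ Y" shows "i = j \<and> X = Y"
proof -
  have "takeWhile Not (blk i @ X) = takeWhile Not (blk j @ Y)" using assms by simp
  then have ij: "i = j" unfolding tw_blk by simp
  have "drop (Suc i) (blk i @ X) = drop (Suc j) (blk j @ Y)" using assms ij by simp
  then have "X = Y" unfolding dr_blk .
  then show ?thesis using ij by simp
qed

lemma cl_inj: "pos \<nu>1 \<Longrightarrow> pos \<nu>2 \<Longrightarrow> cl \<nu>1 = cl \<nu>2 \<Longrightarrow> \<nu>1 = \<nu>2"
proof (induction \<nu>1 arbitrary: \<nu>2)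
  case Nil then show ?case by (cases \<nu>2) simp_all
next
  case (Cons a \<nu>1)
  then obtain b \<nu>2' where n2: "\<nu>2 = b # \<nu>2'" by (cases \<nu>2) simp_all
  have e: "blk (a - 1) @ cl \<nu>1 = blk (b - 1) @ cl \<nu>2'" using Cons.prems(3) n2 by simp
  have ab: "a - 1 = b - 1" and c: "cl \<nu>1 = cl \<nu>2'" using blk_app_inj[OF e] by simp_all
  have pa: "0 < a" "pos \<nu>1" using Cons.prems(1) by simp_all
  have pb: "0 < b" "pos \<nu>2'" using Cons.prems(2) n2 by simp_all
  have "\<nu>1 = \<nu>2'" using Cons.IH[OF pa(2) pb(2) c] .
  moreover have "a = b" using ab pa(1) pb(1) by simp
  ultimately show ?case using n2 by simp
qed

lemma sum_list_concat': "sum_list (concat bs) = sum_list (map sum_list (bs :: nat list list))"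
  by (induction bs) auto

lemma refines_sum: "refines \<nu> la \<Longrightarrow> sum_list \<nu> = sum_list la"
  unfolding refines_def using sum_list_concat' by auto

lemma refine_to_Rl:
  "(\<forall>b\<in>set bs. b \<noteq> [] \<and> pos b) \<Longrightarrow> cl (concat bs) \<in> Rl (cl (map sum_list bs))"
proof (induction bs)
  case Nil then show ?case by simp
next
  case (Cons b bs)
  have b: "b \<noteq> []" "pos b" using Cons.prems by auto
  have "sum_list b > 0" using b by (cases b) auto
  then have "cl b \<in> Rl (blk (sum_list b - 1))"
    using length_cl[OF b(2)] cl_end[of b] cl_ne[OF b(1)] by (simp add: Rl_blk_mem)
  moreover have "cl (concat bs) \<in> Rl (cl (map sum_list bs))" using Cons by simp
  ultimately show ?case by (auto simp: Rl_append)
qed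

lemma Rl_cl_char:
  "pos la \<Longrightarrow> Y \<in> Rl (cl la) \<longleftrightarrow> (\<exists>\<nu>. pos \<nu> \<and> refines \<nu> la \<and> Y = cl \<nu>)"
proof
  assume p: "pos la" and "Y \<in> Rl (cl la)"
  then show "\<exists>\<nu>. pos \<nu> \<and> refines \<nu> la \<and> Y = cl \<nu>"
  proof (induction la arbitrary: Y)
    case Nil
    then show ?case by (intro exI[of _ "[]"]) (auto simp: refines_def)
  next
    case (Cons l la)
    from Cons.prems(2) obtain Y1 Y2 where Y: "Y = Y1 @ Y2" "Y1 \<in> Rl (blk (l - 1))" "Y2 \<in> Rl (cl la)"
      by (auto simp: Rl_append)
    have l: "0 < l" using Cons.prems(1) by simp
    obtain \<nu>2 where n2: "pos \<nu>2" "refines \<nu>2 la" "Y2 = cl \<nu>2"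
      using Cons.IH[OF _ Y(3)] Cons.prems(1) by auto
    have y1: "length Y1 = l" "last Y1" using Y(2) l by (auto simp: Rl_blk_mem)
    then obtain \<nu>1 where n1: "pos \<nu>1" "Y1 = cl \<nu>1" using decomp_cl[of Y1] by auto
    have s1: "sum_list \<nu>1 = l" using length_cl[OF n1(1)] n1(2) y1(1) by simp
    have ne1: "\<nu>1 \<noteq> []" using s1 l by auto
    obtain bs where bs: "concat bs = \<nu>2" "\<forall>b\<in>set bs. b \<noteq> []" "map sum_list bs = la"
      using n2(2) by (auto simp: refines_def)
    have "refines (\<nu>1 @ \<nu>2) (l # la)" unfolding refines_def
      using bs ne1 s1 by (intro exI[of _ "\<nu>1 # bs"]) simp
    then show ?case using n1 n2 Y by (intro exI[of _ "\<nu>1 @ \<nu>2"]) simp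
  qed
next
  assume "\<exists>\<nu>. pos \<nu> \<and> refines \<nu> la \<and> Y = cl \<nu>"
  then obtain \<nu> bs where n: "pos \<nu>" "Y = cl \<nu>" "concat bs = \<nu>" "\<forall>b\<in>set bs. b \<noteq> []" "map sum_list bs = la"
    by (auto simp: refines_def)
  have "\<forall>b\<in>set bs. b \<noteq> [] \<and> pos b" using n(1,3,4) by (auto simp: pos_def)
  then have "cl (concat bs) \<in> Rl (cl (map sum_list bs))" by (rule refine_to_Rl)
  then show "Y \<in> Rl (cl la)" using n by simp
qed

theorem mainTheorem12:
  fixes G :: "('a, 'b) monoid_scheme" and n :: nat and \<mu> :: "nat list"
  assumes "group G" and "finite (carrier G)" and "card (carrier G) \<ge> 2"
    and "n \<ge> 1" and "is_composition n \<mu>"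
  shows "(\<forall>S. is_antipode G (sc_one G) (sc_one G) (sc_one G) S \<longrightarrow>
            S (chi_bn0 G n \<mu>) =
            scale ((-1) ^ length \<mu>) (hprod G (sc_one G) (map (\<lambda>m. chi_bn0 G m [m]) (rev \<mu>))))
       \<and> (\<forall>S. is_antipode G (sc_reg G) (sc_one G) (sc_regm1_dual G) S \<longrightarrow>
            S (ind_bn1 G n \<mu>) =
            (\<Sum>\<nu>\<in>{\<nu>. is_composition n \<nu> \<and> refines \<nu> (rev \<mu>)}.
               scale ((-1) ^ length \<nu>) (ind_bn1 G n \<nu>)))"
proof -
  note G = assms(1) and fin = assms(2) and c2 = assms(3)
  have p: "pos \<mu>" and s: "sum_list \<mu> = n" using assms(5) by (auto simp: is_composition_def pos_def)
  have ne: "\<mu> \<noteq> []" using s assms(4) by auto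
  have cne: "cl \<mu> \<noteq> []" by (rule cl_ne[OF ne])
  have clast: "last (cl \<mu>)" using cl_end[of \<mu>] cne by simp
  show ?thesis
  proof (intro conjI allI impI)
    fix S assume A: "is_antipode G (sc_one G) (sc_one G) (sc_one G) S"
    have "S (chi_bn0 G n \<mu>) = S (WL G (Lt1 G) (cl \<mu>))" using chi_bn0_WL[OF assms(5,4), of G] by simp
    also have "\<dots> = T1 G (cl \<mu>)" by (rule case1[OF G fin c2 A cne clast])
    also have "\<dots> = scale ((-1) ^ length \<mu>) (WL G (Lt1 G) (cl (rev \<mu>)))"
      by (simp add: T1_def ntrue_cl rb_cl)
    also have "\<dots> = scale ((-1) ^ length \<mu>) (hprod G (sc_one G) (map (\<lambda>m. chi_bn0 G m [m]) (rev \<mu>)))"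
      using hprod_cl[OF G, of "rev \<mu>"] p by simp
    finally show "S (chi_bn0 G n \<mu>) =
            scale ((-1) ^ length \<mu>) (hprod G (sc_one G) (map (\<lambda>m. chi_bn0 G m [m]) (rev \<mu>)))" .
  next
    fix S assume A: "is_antipode G (sc_reg G) (sc_one G) (sc_regm1_dual G) S"
    define N where "N = {\<nu>. is_composition n \<nu> \<and> refines \<nu> (rev \<mu>)}"
    have N: "N = {\<nu>. pos \<nu> \<and> refines \<nu> (rev \<mu>)}"
      unfolding N_def using refines_sum s by (auto simp: is_composition_def pos_def)
    have img: "Rl (cl (rev \<mu>)) = cl ` N"
      unfolding N using Rl_cl_char[of "rev \<mu>"] p by auto
    have inj: "inj_on cl N" unfolding N by (auto intro!: inj_onI cl_inj)
    have "S (ind_bn1 G n \<mu>) = S (WL G (Lt2 G) (cl \<mu>))" using ind_bn1_WL[OF assms(5,4), of G] by simp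
    also have "\<dots> = T2 G (cl \<mu>)" by (rule case2[OF G fin c2 A cne clast])
    also have "\<dots> = (\<Sum>\<nu>\<in>N. scale ((-1) ^ length \<nu>) (ind_bn1 G n \<nu>))"
    proof
      fix zs
      have "T2 G (cl \<mu>) zs = (\<Sum>Y\<in>cl ` N. (-1) ^ ntrue Y * WL G (Lt2 G) Y zs)"
        by (simp add: T2_def rb_cl img)
      also have "\<dots> = (\<Sum>\<nu>\<in>N. (-1) ^ ntrue (cl \<nu>) * WL G (Lt2 G) (cl \<nu>) zs)"
        by (simp add: sum.reindex[OF inj])
      also have "\<dots> = (\<Sum>\<nu>\<in>N. scale ((-1) ^ length \<nu>) (ind_bn1 G n \<nu>) zs)"
      proof (rule sum.cong[OF refl])
        fix \<nu> assume "\<nu> \<in> N"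
        then have "is_composition n \<nu>" by (simp add: N_def)
        then show "(-1) ^ ntrue (cl \<nu>) * WL G (Lt2 G) (cl \<nu>) zs = scale ((-1) ^ length \<nu>) (ind_bn1 G n \<nu>) zs"
          using ind_bn1_WL[of n \<nu> G] assms(4) by (simp add: scale_def ntrue_cl)
      qed
      also have "\<dots> = (\<Sum>\<nu>\<in>N. scale ((-1) ^ length \<nu>) (ind_bn1 G n \<nu>)) zs"
        by (simp add: sum_fun_apply)
      finally show "T2 G (cl \<mu>) zs = (\<Sum>\<nu>\<in>N. scale ((-1) ^ length \<nu>) (ind_bn1 G n \<nu>)) zs" .
    qed
    finally show "S (ind_bn1 G n \<mu>) =
            (\<Sum>\<nu>\<in>{\<nu>. is_composition n \<nu> \<and> refines \<nu> (rev \<mu>)}.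
               scale ((-1) ^ length \<nu>) (ind_bn1 G n \<nu>))" by (simp add: N_def)
  qed
qed


end
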